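(* Assume the Smoothness Assumption (see context), and let $\{x^k_\tau,y^k_\tau,z^k_\tau\}$ be generated by Algorithm 1 with $T=M$, $r\ge\max\{2\rho,L_y+\rho\}$, and $$\frac{24(L_y+1)}{(r-\rho)^2}\le\alpha_x\le\min\Big\{\frac1{12(r+L_x+2L_y)},\frac{(r-\rho)^2}{24(r+L_x)^2(L_y+1)},\frac{r-(\rho+2L_y)}{2L_y(L_x+r)}\Big\}.$$ Then, with output $(\tilde x,\tilde y)$, $$\begin{aligned}\mathbb E\|\nabla_zd_r(\tilde y,\tilde x)\|^2\le{}&\frac1{KT}\Big(15r^2+\frac{97}{\alpha_x^2}\Big)\sum_{k=0}^{K-1}\sum_{\tau=0}^{T-1}\mathbb E\|x^k_{\tau+1}-x^k_\tau\|^2+\frac{35r^2}{KT}\sum_{k=0}^{K-1}\sum_{\tau=0}^{T-1}\mathbb E\|y^k_\tau-y^k_{\tau+1}\|^2\\&+\frac{12r^2}{KT}\sum_{k=0}^{K-1}\sum_{\tau=0}^{T-1}\mathbb E\|x^k_{\tau+1}-z^k_\tau\|^2+61C_{\sigma,x},\end{aligned}$$ where $\nabla_zd_r(\tilde y,\tilde x)$ is the gradient of $z\mapsto d_r(\tilde y,z)$ at $z=\tilde x$, and $C_{\sigma,x}=0$ in the finite-sum setting, $C_{\sigma,x}=\sigma_x^2/B$ in the online setting.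
   Context: Problem. Let $\mathcal X\subseteq\mathbb R^{d_x}$, $\mathcal Y\subseteq\mathbb R^{d_y}$ be nonempty closed convex sets, $\mathbb P$ a distribution on $\Xi$, $f:\mathbb R^{d_x}\times\mathbb R^{d_y}\times\Xi\to\mathbb R$, $F(x,y)=\mathbb E_{\xi\sim\mathbb P}[f(x,y;\xi)]$ (finite-sum setting: empirical distribution of $N$ samples; online setting: i.i.d. sampling). Smoothness Assumption: (i) $\mathcal Y$ compact with diameter $D_{\mathcal Y}$; (ii) $\mathbb E|f(x_1,y_1;\xi)-f(x_2,y_2;\xi)|\le\ell(\|x_1-x_2\|+\|y_1-y_2\|)$ on $\mathcal X\times\mathcal Y$; (iii) for all $x,x_i\in\mathcal X$, $y,y_i\in\mathcal Y$: $\mathbb E\|\nabla_xf(x_1,y;\xi)-\nabla_xf(x_2,y;\xi)\|^2\le L_x^2\|x_1-x_2\|^2$, $\mathbb E\|\nabla_xf(x,y_1;\xi)-\nabla_xf(x,y_2;\xi)\|^2\le L_y^2\|y_1-y_2\|^2$, $\mathbb E\|\nabla_yf(x_1,y_1;\xi)-\nabla_yf(x_2,y_2;\xi)\|^2\le L_y^2(\|x_1-x_2\|^2+\|y_1-y_2\|^2)$; (iv) $F(\cdot,y)+\frac\rho2\|\cdot\|^2$ convex on $\mathcal X$ for each $y$; (v) $\mathbb E[\nabla f(x,y;\xi)\mid(x,y)]=\nabla F(x,y)$, $\mathbb E\|\nabla_xf-\nabla_xF\|^2\le\sigma_x^2$, $\mathbb E\|\nabla_yf-\nabla_yF\|^2\le\sigma_y^2$;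 (vi) $\max_y\min_xF\ge\underline F$. Notation: $F_r(x,y,z)=F(x,y)+\frac r2\|x-z\|^2$, $d_r(y,z)=\min_{x\in\mathcal X}F_r(x,y,z)$. Algorithm 1: Input $(x^0_0,y^0_0,z^0_0)$, positive integers $K,T,M,B$, parameters $\alpha_x,\alpha_y,\beta,r>0$. For $k=0,\dots,K-1$, $\tau=0,\dots,T-1$: if $\tau=0$, $G^k_{x,0}=\frac1B\sum_{i=1}^B\nabla_xf(x^k_0,y^k_0;\xi^k_{0,i})$, $G^k_{y,0}$ analogously, with $B$ i.i.d. samples (online) or all $N$ samples, $B=N$ (finite-sum); if $\tau\ge1$, with $M$ fresh i.i.d. samples, $G^k_{x,\tau}=\frac1M\sum_{i=1}^M[\nabla_xf(x^k_\tau,y^k_\tau;\xi^k_{\tau,i})-\nabla_xf(x^k_{\tau-1},y^k_{\tau-1};\xi^k_{\tau,i})]+G^k_{x,\tau-1}$, $G^k_{y,\tau}$ analogously. Update $x^k_{\tau+1}=\mathrm{proj}_{\mathcal X}(x^k_\tau-\alpha_x[G^k_{x,\tau}+r(x^k_\tau-z^k_\tau)])$, $y^k_{\tau+1}=\mathrm{proj}_{\mathcal Y}(y^k_\tau+\alpha_yG^k_{y,\tau})$, $z^k_{\tau+1}=z^k_\tau+\beta(x^k_{\tau+1}-z^k_\tau)$; $(x^{k+1}_0,y^{k+1}_0,z^{k+1}_0)=(x^k_T,y^k_T,z^k_T)$. Output $(\tilde x,\tilde y)$ uniformly at random from $\{(x^k_{\tau+1},y^k_{\tau+1})\}$. *)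

theory Defs
  imports "HOL-Probability.Probability"
begin

text \<open>The two sampling settings: online (initial batch of B i.i.d. samples) and
  finite-sum (P is the empirical distribution of the list of N samples; the
  initial estimator uses all N samples).\<close>
datatype 'xi setting = Online nat | FiniteSum "'xi list"

definition Fexp :: "'xi measure \<Rightarrow> ('x \<Rightarrow> 'y \<Rightarrow> 'xi \<Rightarrow> real) \<Rightarrow> 'x \<Rightarrow> 'y \<Rightarrow> real" where
  "Fexp P f x y = (\<integral>\<xi>. f x y \<xi> \<partial>P)"

definition d_r :: "'x::real_normed_vector set \<Rightarrow> 'xi measure \<Rightarrow> ('x \<Rightarrow> 'y \<Rightarrow> 'xi \<Rightarrow> real)
    \<Rightarrow> real \<Rightarrow> 'y \<Rightarrow> 'x \<Rightarrow> real" where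
  "d_r X P f r y z = (INF x\<in>X. Fexp P f x y + r / 2 * (norm (x - z))\<^sup>2)"

definition grad :: "('a::real_inner \<Rightarrow> real) \<Rightarrow> 'a \<Rightarrow> 'a" where
  "grad g z = (THE v. (g has_derivative (\<lambda>h. v \<bullet> h)) (at z))"

definition init_est :: "'xi setting \<Rightarrow> ('x \<Rightarrow> 'y \<Rightarrow> 'xi \<Rightarrow> 'v::real_vector) \<Rightarrow> (nat \<Rightarrow> 'xi)
    \<Rightarrow> 'x \<Rightarrow> 'y \<Rightarrow> 'v" where
  "init_est s g smp x y = (case s of
      Online B \<Rightarrow> (1 / real B) *\<^sub>R (\<Sum>i<B. g x y (smp i))
    | FiniteSum ss \<Rightarrow> (1 / real (length ss)) *\<^sub>R sum_list (map (g x y) ss))"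

text \<open>Algorithm 1, flattened: the state at global step n = k*T + tau (tau < T) is
  (x^k_tau, y^k_tau, z^k_tau, G^k_{x,tau}, G^k_{y,tau}); since
  (x^{k+1}_0,y^{k+1}_0,z^{k+1}_0) = (x^k_T,y^k_T,z^k_T), the positions at step k*T+T
  are also x^k_T etc.  smp k tau i is the sample xi^k_{tau,i}.\<close>
primrec alg :: "'x::euclidean_space set \<Rightarrow> 'y::euclidean_space set \<Rightarrow> ('x \<Rightarrow> 'y \<Rightarrow> 'xi \<Rightarrow> 'x)
    \<Rightarrow> ('x \<Rightarrow> 'y \<Rightarrow> 'xi \<Rightarrow> 'y) \<Rightarrow> 'xi setting \<Rightarrow> (nat \<Rightarrow> nat \<Rightarrow> nat \<Rightarrow> 'xi)
    \<Rightarrow> nat \<Rightarrow> nat \<Rightarrow> real \<Rightarrow> real \<Rightarrow> real \<Rightarrow> real \<Rightarrow> 'x \<Rightarrow> 'y \<Rightarrow> 'x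
    \<Rightarrow> nat \<Rightarrow> 'x \<times> 'y \<times> 'x \<times> 'x \<times> 'y" where
  "alg X Y gx gy s smp T M ax ay b r x0 y0 z0 0 =
     (x0, y0, z0, init_est s gx (smp 0 0) x0 y0, init_est s gy (smp 0 0) x0 y0)"
| "alg X Y gx gy s smp T M ax ay b r x0 y0 z0 (Suc n) =
     (case alg X Y gx gy s smp T M ax ay b r x0 y0 z0 n of (x, y, z, Gx, Gy) \<Rightarrow>
       (let x' = closest_point X (x - ax *\<^sub>R (Gx + r *\<^sub>R (x - z)));
            y' = closest_point Y (y + ay *\<^sub>R Gy);
            z' = z + b *\<^sub>R (x' - z);
            k = Suc n div T;
            \<tau> = Suc n mod T
        in if \<tau> = 0
           then (x', y', z', init_est s gx (smp k 0) x' y', init_est s gy (smp k 0) x' y')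
           else (x', y', z',
                 (1 / real M) *\<^sub>R (\<Sum>i<M. gx x' y' (smp k \<tau> i) - gx x y (smp k \<tau> i)) + Gx,
                 (1 / real M) *\<^sub>R (\<Sum>i<M. gy x' y' (smp k \<tau> i) - gy x y (smp k \<tau> i)) + Gy)))"

end

theory Submission
  imports Defs
begin

lemma one_step_var:
  fixes v :: "'a \<Rightarrow> 'v::euclidean_space"
  assumes P: "prob_space P" and v: "integrable P v" "integrable P (\<lambda>s. (norm (v s))\<^sup>2)" "(\<integral>s. v s \<partial>P) = 0"
  shows "(\<integral>\<^sup>+s. ennreal ((norm (C + a *\<^sub>R v s))\<^sup>2) \<partial>P) = ennreal ((norm C)\<^sup>2 + a\<^sup>2 * (\<integral>s. (norm (v s))\<^sup>2 \<partial>P))"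
proof -
  interpret prob_space P by fact
  have eq: "\<And>s. (norm (C + a *\<^sub>R v s))\<^sup>2 = (norm C)\<^sup>2 + 2 * a * (C \<bullet> v s) + a\<^sup>2 * (norm (v s))\<^sup>2"
    unfolding power2_norm_eq_inner by (simp add: inner_add_left inner_add_right power2_eq_square algebra_simps inner_commute)
  have i1: "integrable P (\<lambda>s. 2 * a * (C \<bullet> v s))" using v by (intro integrable_mult_right) auto
  have i2: "integrable P (\<lambda>s. a\<^sup>2 * (norm (v s))\<^sup>2)" using v(2) by (rule integrable_mult_right)
  have i0: "integrable P (\<lambda>s. (norm C)\<^sup>2)" by simp
  have i01: "integrable P (\<lambda>s. (norm C)\<^sup>2 + 2 * a * (C \<bullet> v s))" by (rule Bochner_Integration.integrable_add[OF i0 i1])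
  have int: "integrable P (\<lambda>s. (norm C)\<^sup>2 + 2 * a * (C \<bullet> v s) + a\<^sup>2 * (norm (v s))\<^sup>2)"
    by (rule Bochner_Integration.integrable_add[OF i01 i2])
  have ieq: "(\<integral>s. (norm C)\<^sup>2 + 2 * a * (C \<bullet> v s) + a\<^sup>2 * (norm (v s))\<^sup>2 \<partial>P) = (norm C)\<^sup>2 + a\<^sup>2 * (\<integral>s. (norm (v s))\<^sup>2 \<partial>P)"
    using Bochner_Integration.integral_add[OF i01 i2] Bochner_Integration.integral_add[OF i0 i1] v
    by (simp add: prob_space)
  have "(\<integral>\<^sup>+s. ennreal ((norm (C + a *\<^sub>R v s))\<^sup>2) \<partial>P) = ennreal (\<integral>s. (norm (C + a *\<^sub>R v s))\<^sup>2 \<partial>P)"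
  proof -
    have int': "integrable P (\<lambda>s. (norm (C + a *\<^sub>R v s))\<^sup>2)" using int by (simp only: eq)
    show ?thesis by (rule nn_integral_eq_integral[OF int']) auto
  qed
  also have "(\<integral>s. (norm (C + a *\<^sub>R v s))\<^sup>2 \<partial>P) = (norm C)\<^sup>2 + a\<^sup>2 * (\<integral>s. (norm (v s))\<^sup>2 \<partial>P)"
    unfolding eq by (rule ieq)
  finally show ?thesis .
qed

lemma iid_sum:
  fixes v :: "'a \<Rightarrow> 'v::euclidean_space"
  assumes Pp: "prob_space P" and v: "integrable P v" "integrable P (\<lambda>s. (norm (v s))\<^sup>2)" "(\<integral>s. v s \<partial>P) = 0"
    and J: "finite J"
  shows "(\<integral>\<^sup>+t. ennreal ((norm (C + a *\<^sub>R (\<Sum>j\<in>J. v (t j))))\<^sup>2) \<partial>PiM J (\<lambda>_. P))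
         = ennreal ((norm C)\<^sup>2 + a\<^sup>2 * card J * (\<integral>s. (norm (v s))\<^sup>2 \<partial>P))"
  using J
proof (induction J arbitrary: C rule: finite_induct)
  case empty
  interpret prob_space "PiM {} (\<lambda>_. P)" by (rule prob_space_PiM) (rule Pp)
  show ?case by (simp add: emeasure_space_1)
next
  case (insert i J)
  interpret prob_space P by (rule Pp)
  interpret product_prob_space "\<lambda>_. P" by unfold_locales
  interpret PJ: prob_space "PiM J (\<lambda>_. P)" by (rule prob_space_PiM) (rule assms(1))
  have vm[measurable]: "v \<in> borel_measurable P" using v by auto
  have "(\<integral>\<^sup>+t. ennreal ((norm (C + a *\<^sub>R (\<Sum>j\<in>insert i J. v (t j))))\<^sup>2) \<partial>PiM (insert i J) (\<lambda>_. P))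
    = (\<integral>\<^sup>+x. (\<integral>\<^sup>+y. ennreal ((norm (C + a *\<^sub>R (\<Sum>j\<in>insert i J. v ((x(i:=y)) j))))\<^sup>2) \<partial>P) \<partial>PiM J (\<lambda>_. P))"
    by (rule product_nn_integral_insert) (use insert in auto)
  also have "\<dots> = (\<integral>\<^sup>+x. ennreal ((norm (C + a *\<^sub>R (\<Sum>j\<in>J. v (x j))))\<^sup>2 + a\<^sup>2 * (\<integral>s. (norm (v s))\<^sup>2 \<partial>P)) \<partial>PiM J (\<lambda>_. P))"
  proof (rule nn_integral_cong)
    fix x
    have "\<And>y. (\<Sum>j\<in>insert i J. v ((x(i:=y)) j)) = v y + (\<Sum>j\<in>J. v (x j))"
      using insert by (auto intro!: sum.cong)
    then have e: "\<And>y. C + a *\<^sub>R (\<Sum>j\<in>insert i J. v ((x(i:=y)) j)) = (C + a *\<^sub>R (\<Sum>j\<in>J. v (x j))) + a *\<^sub>R v y"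
      by (simp add: algebra_simps)
    show "(\<integral>\<^sup>+y. ennreal ((norm (C + a *\<^sub>R (\<Sum>j\<in>insert i J. v ((x(i:=y)) j))))\<^sup>2) \<partial>P)
       = ennreal ((norm (C + a *\<^sub>R (\<Sum>j\<in>J. v (x j))))\<^sup>2 + a\<^sup>2 * (\<integral>s. (norm (v s))\<^sup>2 \<partial>P))"
      unfolding e by (rule one_step_var[OF Pp v])
  qed
  also have "\<dots> = (\<integral>\<^sup>+x. ennreal ((norm (C + a *\<^sub>R (\<Sum>j\<in>J. v (x j))))\<^sup>2) \<partial>PiM J (\<lambda>_. P))
       + (\<integral>\<^sup>+x. ennreal (a\<^sup>2 * (\<integral>s. (norm (v s))\<^sup>2 \<partial>P)) \<partial>PiM J (\<lambda>_. P))"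
  proof -
    have m: "(\<lambda>x. ennreal ((norm (C + a *\<^sub>R (\<Sum>j\<in>J. v (x j))))\<^sup>2)) \<in> borel_measurable (PiM J (\<lambda>_. P))" by measurable
    have "\<And>x. ennreal ((norm (C + a *\<^sub>R (\<Sum>j\<in>J. v (x j))))\<^sup>2 + a\<^sup>2 * (\<integral>s. (norm (v s))\<^sup>2 \<partial>P))
       = ennreal ((norm (C + a *\<^sub>R (\<Sum>j\<in>J. v (x j))))\<^sup>2) + ennreal (a\<^sup>2 * (\<integral>s. (norm (v s))\<^sup>2 \<partial>P))"
      by (rule ennreal_plus) auto
    then show ?thesis using nn_integral_add[OF m, of "\<lambda>_. ennreal (a\<^sup>2 * (\<integral>s. (norm (v s))\<^sup>2 \<partial>P))"] by simp
  qed
  also have "\<dots> = ennreal ((norm C)\<^sup>2 + a\<^sup>2 * card (insert i J) * (\<integral>s. (norm (v s))\<^sup>2 \<partial>P))"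
  proof -
    have K: "0 \<le> (\<integral>s. (norm (v s))\<^sup>2 \<partial>P)" by simp
    have "ennreal ((norm C)\<^sup>2 + a\<^sup>2 * card J * (\<integral>s. (norm (v s))\<^sup>2 \<partial>P)) + ennreal (a\<^sup>2 * (\<integral>s. (norm (v s))\<^sup>2 \<partial>P))
       = ennreal ((norm C)\<^sup>2 + a\<^sup>2 * card J * (\<integral>s. (norm (v s))\<^sup>2 \<partial>P) + a\<^sup>2 * (\<integral>s. (norm (v s))\<^sup>2 \<partial>P))"
      by (rule ennreal_plus[symmetric]) (use K in auto)
    also have "(norm C)\<^sup>2 + a\<^sup>2 * card J * (\<integral>s. (norm (v s))\<^sup>2 \<partial>P) + a\<^sup>2 * (\<integral>s. (norm (v s))\<^sup>2 \<partial>P)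
       = (norm C)\<^sup>2 + a\<^sup>2 * card (insert i J) * (\<integral>s. (norm (v s))\<^sup>2 \<partial>P)"
      using insert by (simp add: algebra_simps)
    finally show ?thesis using insert.IH[of C] by (simp add: PJ.emeasure_space_1)
  qed
  finally show ?case .
qed


lemma sq_integrable:
  fixes h :: "'a \<Rightarrow> 'v::euclidean_space"
  assumes Pp: "prob_space P" and h: "integrable P h" and fin: "(\<integral>\<^sup>+s. ennreal ((norm (h s))\<^sup>2) \<partial>P) < \<infinity>"
  shows "integrable P (\<lambda>s. (norm (h s))\<^sup>2)"
proof -
  have hm: "h \<in> borel_measurable P" using h by auto
  show ?thesis unfolding integrable_iff_bounded using fin hm by auto
qed

lemma second_moment:
  fixes h :: "'a \<Rightarrow> 'v::euclidean_space"
  assumes Pp: "prob_space P" and h: "integrable P h" and h2: "integrable P (\<lambda>s. (norm (h s))\<^sup>2)"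
  shows "integrable P (\<lambda>s. (norm (h s - (\<integral>s. h s \<partial>P)))\<^sup>2)"
    and "(\<integral>s. (norm (h s - (\<integral>s. h s \<partial>P)))\<^sup>2 \<partial>P) + (norm (\<integral>s. h s \<partial>P))\<^sup>2 = (\<integral>s. (norm (h s))\<^sup>2 \<partial>P)"
proof -
  interpret prob_space P by (rule Pp)
  define m where "m = (\<integral>s. h s \<partial>P)"
  have eq: "\<And>s. (norm (h s - m))\<^sup>2 = (norm (h s))\<^sup>2 + (- 2 * (h s \<bullet> m) + (norm m)\<^sup>2)"
    unfolding power2_norm_eq_inner by (simp add: inner_diff_left inner_diff_right inner_commute algebra_simps)
  have i1: "integrable P (\<lambda>s. - 2 * (h s \<bullet> m))" using h by (intro integrable_mult_right) auto
  have i0: "integrable P (\<lambda>s. (norm m)\<^sup>2)" by simp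
  have i10: "integrable P (\<lambda>s. - 2 * (h s \<bullet> m) + (norm m)\<^sup>2)" by (rule Bochner_Integration.integrable_add[OF i1 i0])
  have int: "integrable P (\<lambda>s. (norm (h s))\<^sup>2 + (- 2 * (h s \<bullet> m) + (norm m)\<^sup>2))"
    by (rule Bochner_Integration.integrable_add[OF h2 i10])
  then show "integrable P (\<lambda>s. (norm (h s - (\<integral>s. h s \<partial>P)))\<^sup>2)" unfolding m_def[symmetric] by (simp only: eq)
  have "(\<integral>s. (norm (h s - m))\<^sup>2 \<partial>P) = (\<integral>s. (norm (h s))\<^sup>2 \<partial>P) + (- 2 * (m \<bullet> m) + (norm m)\<^sup>2)"
    unfolding eq using Bochner_Integration.integral_add[OF h2 i10] Bochner_Integration.integral_add[OF i1 i0] h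
    by (simp add: prob_space m_def[symmetric])
  then show "(\<integral>s. (norm (h s - (\<integral>s. h s \<partial>P)))\<^sup>2 \<partial>P) + (norm (\<integral>s. h s \<partial>P))\<^sup>2 = (\<integral>s. (norm (h s))\<^sup>2 \<partial>P)"
    unfolding m_def[symmetric] by (simp add: power2_norm_eq_inner)
qed

lemma jensen_sq:
  fixes h :: "'a \<Rightarrow> 'v::euclidean_space"
  assumes Pp: "prob_space P" and h: "integrable P h"
  shows "ennreal ((norm (\<integral>s. h s \<partial>P))\<^sup>2) \<le> (\<integral>\<^sup>+s. ennreal ((norm (h s))\<^sup>2) \<partial>P)"
proof (cases "(\<integral>\<^sup>+s. ennreal ((norm (h s))\<^sup>2) \<partial>P) < \<infinity>")
  case True
  have h2: "integrable P (\<lambda>s. (norm (h s))\<^sup>2)" by (rule sq_integrable[OF Pp h True])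
  note sm = second_moment[OF Pp h h2]
  have "0 \<le> (\<integral>s. (norm (h s - (\<integral>s. h s \<partial>P)))\<^sup>2 \<partial>P)" by simp
  then have "(norm (\<integral>s. h s \<partial>P))\<^sup>2 \<le> (\<integral>s. (norm (h s))\<^sup>2 \<partial>P)" using sm(2) by linarith
  moreover have "(\<integral>\<^sup>+s. ennreal ((norm (h s))\<^sup>2) \<partial>P) = ennreal (\<integral>s. (norm (h s))\<^sup>2 \<partial>P)"
    by (rule nn_integral_eq_integral[OF h2]) auto
  ultimately show ?thesis by simp
qed (simp add: top_unique not_less)

lemma var_le_second:
  fixes h :: "'a \<Rightarrow> 'v::euclidean_space"
  assumes Pp: "prob_space P" and h: "integrable P h" and h2: "integrable P (\<lambda>s. (norm (h s))\<^sup>2)"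
  shows "(\<integral>s. (norm (h s - (\<integral>s. h s \<partial>P)))\<^sup>2 \<partial>P) \<le> (\<integral>s. (norm (h s))\<^sup>2 \<partial>P)"
  using second_moment[OF Pp h h2] by (smt (verit) zero_le_power2)


lemma iid_avg:
  fixes h :: "'a \<Rightarrow> 'v::euclidean_space"
  assumes Pp: "prob_space P" and h: "integrable P h" and h2: "integrable P (\<lambda>s. (norm (h s - (\<integral>s. h s \<partial>P)))\<^sup>2)"
    and J: "finite J" "card J = m" "1 \<le> m"
  shows "(\<integral>\<^sup>+t. ennreal ((norm (C + (1 / real m) *\<^sub>R (\<Sum>j\<in>J. h (t j) - (\<integral>s. h s \<partial>P))))\<^sup>2) \<partial>PiM J (\<lambda>_. P))
         = ennreal ((norm C)\<^sup>2 + (1 / real m) * (\<integral>s. (norm (h s - (\<integral>s. h s \<partial>P)))\<^sup>2 \<partial>P))"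
proof -
  interpret prob_space P by (rule Pp)
  define v where "v = (\<lambda>s. h s - (\<integral>s. h s \<partial>P))"
  have vi: "integrable P v" unfolding v_def using h by auto
  have v2: "integrable P (\<lambda>s. (norm (v s))\<^sup>2)" using h2 by (simp add: v_def)
  have v0: "(\<integral>s. v s \<partial>P) = 0" unfolding v_def using h by (simp add: prob_space)
  have "(1 / real m)\<^sup>2 * real (card J) = 1 / real m" using J by (simp add: power2_eq_square)
  then show ?thesis using iid_sum[OF Pp vi v2 v0 J(1), of C "1 / real m"] by (simp add: v_def)
qed


lemma dir_quot:
  fixes \<phi> :: "'a::real_normed_vector \<Rightarrow> real"
  assumes d: "(\<phi> has_derivative \<phi>') (at x within S)" and S: "convex S" "x \<in> S" "w \<in> S"
  shows "((\<lambda>t. (\<phi> (x + t *\<^sub>R (w - x)) - \<phi> x) / t) \<longlongrightarrow> \<phi>' (w - x)) (at_right 0)"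
proof -
  define \<gamma> where "\<gamma> = (\<lambda>t::real. x + t *\<^sub>R (w - x))"
  have g: "(\<gamma> has_derivative (\<lambda>t. t *\<^sub>R (w - x))) (at 0 within {0..1})"
    unfolding \<gamma>_def by (auto intro!: derivative_eq_intros)
  have sub: "\<gamma> ` {0..1} \<subseteq> S"
  proof
    fix v assume "v \<in> \<gamma> ` {0..1}"
    then obtain t where t: "t \<in> {0..1}" "v = \<gamma> t" by auto
    have "v = (1 - t) *\<^sub>R x + t *\<^sub>R w" using t by (simp add: \<gamma>_def algebra_simps)
    then show "v \<in> S" using S t convexD_alt[of S x w t] by auto
  qed
  have d2: "(\<phi> has_derivative \<phi>') (at (\<gamma> 0) within (\<gamma> ` {0..1}))"
    using has_derivative_subset[OF d sub] by (simp add: \<gamma>_def)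
  have ch: "((\<phi> \<circ> \<gamma>) has_derivative (\<phi>' \<circ> (\<lambda>t. t *\<^sub>R (w - x)))) (at 0 within {0..1})"
    by (rule diff_chain_within[OF g d2])
  have lin: "linear \<phi>'" using d by (auto dest: has_derivative_linear)
  have "((\<phi> \<circ> \<gamma>) has_field_derivative \<phi>' (w - x)) (at 0 within {0..1})"
    by (rule has_derivative_imp_has_field_derivative[OF ch]) (simp add: linear_cmul[OF lin])
  then have "((\<lambda>y. ((\<phi> \<circ> \<gamma>) y - (\<phi> \<circ> \<gamma>) 0) / (y - 0)) \<longlongrightarrow> \<phi>' (w - x)) (at_right 0)"
    unfolding has_field_derivative_iff by (simp add: at_within_Icc_at_right)
  then show ?thesis by (simp add: \<gamma>_def)
qed

lemma min_first_order:
  fixes \<phi> :: "'a::real_normed_vector \<Rightarrow> real"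
  assumes d: "(\<phi> has_derivative \<phi>') (at x within S)" and S: "convex S" "x \<in> S" "w \<in> S"
    and min: "\<And>v. v \<in> S \<Longrightarrow> \<phi> x \<le> \<phi> v"
  shows "0 \<le> \<phi>' (w - x)"
proof (rule tendsto_lowerbound[OF dir_quot[OF d S]])
  show "at_right (0::real) \<noteq> bot" by simp
  have "\<forall>t. 0 < t \<longrightarrow> t < 1 \<longrightarrow> 0 \<le> (\<phi> (x + t *\<^sub>R (w - x)) - \<phi> x) / t"
  proof (intro allI impI)
    fix t :: real assume t: "0 < t" "t < 1"
    have "x + t *\<^sub>R (w - x) = (1 - t) *\<^sub>R x + t *\<^sub>R w" by (simp add: algebra_simps)
    then have "x + t *\<^sub>R (w - x) \<in> S" using S t convexD_alt[of S x w t] by auto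
    then show "0 \<le> (\<phi> (x + t *\<^sub>R (w - x)) - \<phi> x) / t" using min t by auto
  qed
  then show "\<forall>\<^sub>F t in at_right 0. 0 \<le> (\<phi> (x + t *\<^sub>R (w - x)) - \<phi> x) / t"
    by (subst eventually_at_right[of 0 "1::real"]) (auto intro!: exI[of _ 1])
qed

lemma convex_tangent:
  fixes \<phi> :: "'a::real_normed_vector \<Rightarrow> real"
  assumes d: "(\<phi> has_derivative \<phi>') (at x within S)" and S: "convex S" "x \<in> S" "w \<in> S"
    and cv: "convex_on S \<phi>"
  shows "\<phi> x + \<phi>' (w - x) \<le> \<phi> w"
proof -
  have "\<phi>' (w - x) \<le> \<phi> w - \<phi> x"
  proof (rule tendsto_upperbound[OF dir_quot[OF d S]])
    show "at_right (0::real) \<noteq> bot" by simp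
    have "\<forall>t. 0 < t \<longrightarrow> t < 1 \<longrightarrow> (\<phi> (x + t *\<^sub>R (w - x)) - \<phi> x) / t \<le> \<phi> w - \<phi> x"
    proof (intro allI impI)
      fix t :: real assume t: "0 < t" "t < 1"
      have e: "x + t *\<^sub>R (w - x) = (1 - t) *\<^sub>R x + t *\<^sub>R w" by (simp add: algebra_simps)
      have "\<phi> ((1 - t) *\<^sub>R x + t *\<^sub>R w) \<le> (1 - t) * \<phi> x + t * \<phi> w"
        using cv S t by (intro convex_onD) auto
      then have "\<phi> (x + t *\<^sub>R (w - x)) - \<phi> x \<le> t * (\<phi> w - \<phi> x)" unfolding e by (simp add: algebra_simps)
      then show "(\<phi> (x + t *\<^sub>R (w - x)) - \<phi> x) / t \<le> \<phi> w - \<phi> x" using t by (simp add: divide_le_eq mult.commute)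
    qed
    then show "\<forall>\<^sub>F t in at_right 0. (\<phi> (x + t *\<^sub>R (w - x)) - \<phi> x) / t \<le> \<phi> w - \<phi> x"
      by (subst eventually_at_right[of 0 "1::real"]) (auto intro!: exI[of _ 1])
  qed
  then show ?thesis by simp
qed


locale ana =
  fixes X :: "'x::euclidean_space set" and Y :: "'y::euclidean_space set" and P :: "'xi measure"
    and f :: "'x \<Rightarrow> 'y \<Rightarrow> 'xi \<Rightarrow> real" and gx :: "'x \<Rightarrow> 'y \<Rightarrow> 'xi \<Rightarrow> 'x"
    and \<rho> r Lx Ly :: real
  assumes X: "X \<noteq> {}" "closed X" "convex X"
    and Pp: "prob_space P"
    and unb: "\<And>x y. x \<in> X \<Longrightarrow> y \<in> Y \<Longrightarrow> integrable P (gx x y) \<and>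
        ((\<lambda>x'. Fexp P f x' y) has_derivative (\<lambda>h. (\<integral>z. gx x y z \<partial>P) \<bullet> h)) (at x within X)"
    and wc: "\<And>y. y \<in> Y \<Longrightarrow> convex_on X (\<lambda>x. Fexp P f x y + \<rho> / 2 * (norm x)\<^sup>2)"
    and lgx: "\<And>x1 x2 y. x1 \<in> X \<Longrightarrow> x2 \<in> X \<Longrightarrow> y \<in> Y \<Longrightarrow>
        (\<integral>\<^sup>+z. ennreal ((norm (gx x1 y z - gx x2 y z))\<^sup>2) \<partial>P) \<le> ennreal (Lx\<^sup>2 * (norm (x1 - x2))\<^sup>2)"
    and lgy: "\<And>x y1 y2. x \<in> X \<Longrightarrow> y1 \<in> Y \<Longrightarrow> y2 \<in> Y \<Longrightarrow>
        (\<integral>\<^sup>+z. ennreal ((norm (gx x y1 z - gx x y2 z))\<^sup>2) \<partial>P) \<le> ennreal (Ly\<^sup>2 * (norm (y1 - y2))\<^sup>2)"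
    and rho: "0 \<le> \<rho>" "\<rho> < r"
    and LL: "0 \<le> Lx" "0 \<le> Ly"
begin

definition gF where "gF x y = (\<integral>z. gx x y z \<partial>P)"
definition Fr where "Fr y z x = Fexp P f x y + r / 2 * (norm (x - z))\<^sup>2"
definition prox where "prox y z = (SOME p. p \<in> X \<and> (\<forall>w\<in>X. Fr y z p \<le> Fr y z w))"

lemma F_deriv: "x \<in> X \<Longrightarrow> y \<in> Y \<Longrightarrow> ((\<lambda>x'. Fexp P f x' y) has_derivative (\<lambda>h. gF x y \<bullet> h)) (at x within X)"
  using unb unfolding gF_def by blast

lemma WT:
  assumes "x \<in> X" "w \<in> X" "y \<in> Y"
  shows "Fexp P f x y + gF x y \<bullet> (w - x) - \<rho> / 2 * (norm (w - x))\<^sup>2 \<le> Fexp P f w y"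
proof -
  have d: "((\<lambda>x. Fexp P f x y + \<rho> / 2 * (x \<bullet> x)) has_derivative (\<lambda>h. gF x y \<bullet> h + \<rho> / 2 * (h \<bullet> x + x \<bullet> h))) (at x within X)"
    using F_deriv[OF assms(1,3)] by (auto intro!: derivative_eq_intros)
  have cv: "convex_on X (\<lambda>x. Fexp P f x y + \<rho> / 2 * (x \<bullet> x))"
    using wc[OF assms(3)] by (simp add: power2_norm_eq_inner)
  have "Fexp P f x y + \<rho> / 2 * (x \<bullet> x) + (gF x y \<bullet> (w - x) + \<rho> / 2 * ((w - x) \<bullet> x + x \<bullet> (w - x))) \<le> Fexp P f w y + \<rho> / 2 * (w \<bullet> w)"
    by (rule convex_tangent[OF d X(3) assms(1,2) cv])
  moreover have "\<rho> / 2 * (norm (w - x))\<^sup>2 = \<rho> / 2 * (w \<bullet> w) - \<rho> * (x \<bullet> w) + \<rho> / 2 * (x \<bullet> x)"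
    unfolding power2_norm_eq_inner by (simp add: inner_diff_left inner_diff_right inner_commute algebra_simps)
  moreover have "\<rho> / 2 * ((w - x) \<bullet> x + x \<bullet> (w - x)) = \<rho> * (x \<bullet> w) - \<rho> * (x \<bullet> x)"
    by (simp add: inner_diff_left inner_diff_right inner_commute algebra_simps)
  ultimately show ?thesis by linarith
qed

lemma WM:
  assumes "a \<in> X" "b \<in> X" "y \<in> Y"
  shows "- \<rho> * (norm (a - b))\<^sup>2 \<le> (gF a y - gF b y) \<bullet> (a - b)"
proof -
  have "norm (b - a) = norm (a - b)" by (rule norm_minus_commute)
  then show ?thesis using WT[OF assms(1,2,3)] WT[OF assms(2,1,3)]
    by (simp add: inner_diff_left inner_diff_right inner_commute algebra_simps)
qed

lemma Fr_deriv:
  assumes "x \<in> X" "y \<in> Y"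
  shows "(Fr y z has_derivative (\<lambda>h. (gF x y + r *\<^sub>R (x - z)) \<bullet> h)) (at x within X)"
proof -
  have d: "((\<lambda>x. Fexp P f x y + r / 2 * ((x - z) \<bullet> (x - z))) has_derivative (\<lambda>h. gF x y \<bullet> h + r / 2 * (h \<bullet> (x - z) + (x - z) \<bullet> h))) (at x within X)"
    using F_deriv[OF assms] by (auto intro!: derivative_eq_intros)
  show ?thesis
    unfolding Fr_def power2_norm_eq_inner
    by (rule has_derivative_eq_rhs[OF d]) (simp add: fun_eq_iff inner_add_left inner_commute algebra_simps)
qed

lemma ST:
  assumes "x \<in> X" "w \<in> X" "y \<in> Y"
  shows "Fr y z x + (gF x y + r *\<^sub>R (x - z)) \<bullet> (w - x) + (r - \<rho>) / 2 * (norm (w - x))\<^sup>2 \<le> Fr y z w"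
proof -
  have "r / 2 * (norm (w - z))\<^sup>2 = r / 2 * (norm (x - z))\<^sup>2 + (r *\<^sub>R (x - z)) \<bullet> (w - x) + r / 2 * (norm (w - x))\<^sup>2"
  proof -
    have "w - z = (x - z) + (w - x)" by simp
    then have "(norm (w - z))\<^sup>2 = (norm (x - z))\<^sup>2 + 2 * ((x - z) \<bullet> (w - x)) + (norm (w - x))\<^sup>2"
      unfolding power2_norm_eq_inner
      by (metis (no_types) inner_add_left inner_add_right inner_commute add.assoc mult_2)
    moreover have *: "\<And>a b c d::real. a = b + 2*c + d \<Longrightarrow> r/2*a = r/2*b + r*c + r/2*d" by (simp add: algebra_simps)
    ultimately show ?thesis by (simp only: inner_scaleR_left)
  qed
  moreover have "(gF x y + r *\<^sub>R (x - z)) \<bullet> (w - x) = gF x y \<bullet> (w - x) + (r *\<^sub>R (x - z)) \<bullet> (w - x)"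
    by (simp add: inner_add_left)
  moreover have "(r - \<rho>) / 2 * (norm (w - x))\<^sup>2 = r / 2 * (norm (w - x))\<^sup>2 - \<rho> / 2 * (norm (w - x))\<^sup>2"
    by (simp add: left_diff_distrib diff_divide_distrib)
  ultimately show ?thesis using WT[OF assms] unfolding Fr_def by linarith
qed

lemma Fr_cont: "y \<in> Y \<Longrightarrow> continuous_on X (Fr y z)"
  using Fr_deriv by (intro has_derivative_continuous_on) blast

lemma prox_ex:
  assumes y: "y \<in> Y"
  shows "\<exists>p. p \<in> X \<and> (\<forall>w\<in>X. Fr y z p \<le> Fr y z w)"
proof -
  obtain x0 where x0: "x0 \<in> X" using X by auto
  define v0 where "v0 = gF x0 y + r *\<^sub>R (x0 - z)"
  define \<mu> where "\<mu> = r - \<rho>"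
  have mu: "0 < \<mu>" using rho by (simp add: \<mu>_def)
  define R where "R = 2 * norm v0 / \<mu> + 1"
  have R0: "0 \<le> R" using mu by (simp add: R_def)
  define K where "K = X \<inter> cball x0 R"
  have K: "compact K" "K \<noteq> {}" using X x0 R0 by (auto simp: K_def intro!: closed_Int_compact)
  have "continuous_on K (Fr y z)" using Fr_cont[OF y] by (rule continuous_on_subset) (auto simp: K_def)
  then obtain p where p: "p \<in> K" "\<And>w. w \<in> K \<Longrightarrow> Fr y z p \<le> Fr y z w"
    using continuous_attains_inf[OF K] by blast
  have "Fr y z p \<le> Fr y z w" if w: "w \<in> X" for w
  proof (cases "w \<in> K")
    case True then show ?thesis using p by auto
  next
    case False
    then have d: "R < norm (w - x0)" using w by (auto simp: K_def dist_norm norm_minus_commute)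
    have "Fr y z x0 + v0 \<bullet> (w - x0) + \<mu> / 2 * (norm (w - x0))\<^sup>2 \<le> Fr y z w"
      using ST[OF x0 w y] by (simp add: v0_def \<mu>_def)
    moreover have "- (norm v0 * norm (w - x0)) \<le> v0 \<bullet> (w - x0)"
      using Cauchy_Schwarz_ineq2[of v0 "w - x0"] by (simp add: abs_le_iff)
    moreover have "norm v0 * norm (w - x0) \<le> \<mu> / 2 * (norm (w - x0))\<^sup>2"
    proof -
      have "2 * norm v0 / \<mu> \<le> norm (w - x0)" using d by (simp add: R_def)
      then have "2 * norm v0 \<le> \<mu> * norm (w - x0)" using mu by (simp add: divide_le_eq mult.commute)
      then have "2 * norm v0 * norm (w - x0) \<le> \<mu> * norm (w - x0) * norm (w - x0)"
        by (rule mult_right_mono) simp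
      then show ?thesis by (simp add: power2_eq_square algebra_simps)
    qed
    moreover have "Fr y z p \<le> Fr y z x0" using p x0 R0 by (auto simp: K_def)
    ultimately show ?thesis by linarith
  qed
  then show ?thesis using p by (auto simp: K_def)
qed

lemma prox: assumes "y \<in> Y" shows "prox y z \<in> X" "\<And>w. w \<in> X \<Longrightarrow> Fr y z (prox y z) \<le> Fr y z w"
  using someI_ex[OF prox_ex[OF assms, of z]] unfolding prox_def by blast+

lemma prox_foc:
  assumes y: "y \<in> Y" and w: "w \<in> X"
  shows "0 \<le> (gF (prox y z) y + r *\<^sub>R (prox y z - z)) \<bullet> (w - prox y z)"
  using min_first_order[OF Fr_deriv[OF prox(1)[OF y] y] X(3) prox(1)[OF y] w] prox[OF y] by blast

lemma prox_lip:
  assumes y: "y \<in> Y"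
  shows "(r - \<rho>) * norm (prox y z - prox y z') \<le> r * norm (z - z')"
proof -
  define p where "p = prox y z"
  define q where "q = prox y z'"
  have pq: "p \<in> X" "q \<in> X" using prox[OF y] by (auto simp: p_def q_def)
  have 1: "0 \<le> (gF p y + r *\<^sub>R (p - z)) \<bullet> (q - p)" using prox_foc[OF y pq(2), of z] by (simp add: p_def)
  have 2: "0 \<le> (gF q y + r *\<^sub>R (q - z')) \<bullet> (p - q)" using prox_foc[OF y pq(1), of z'] by (simp add: q_def)
  have 3: "- \<rho> * (norm (p - q))\<^sup>2 \<le> (gF p y - gF q y) \<bullet> (p - q)" by (rule WM[OF pq y])
  have e: "(norm (p - q))\<^sup>2 = (p - q) \<bullet> (p - q)" by (simp add: power2_norm_eq_inner)
  have "(r - \<rho>) * (norm (p - q))\<^sup>2 \<le> r * ((z - z') \<bullet> (p - q))"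
    using 1 2 3 unfolding e by (simp add: inner_diff_left inner_diff_right inner_add_left inner_add_right inner_commute algebra_simps)
  also have "\<dots> \<le> r * (norm (z - z') * norm (p - q))"
    using rho by (intro mult_left_mono) (auto intro: order_trans[OF _ Cauchy_Schwarz_ineq2] )
  finally have "(r - \<rho>) * norm (p - q) * norm (p - q) \<le> r * norm (z - z') * norm (p - q)"
    by (simp add: power2_eq_square algebra_simps)
  then show ?thesis
    by (cases "norm (p - q) = 0") (use rho in \<open>auto simp: p_def q_def\<close>)
qed


lemma d_r_eq:
  assumes y: "y \<in> Y"
  shows "d_r X P f r y z = Fr y z (prox y z)"
proof -
  have eq: "(\<lambda>x. Fexp P f x y + r / 2 * (norm (x - z))\<^sup>2) = Fr y z" by (simp add: fun_eq_iff Fr_def)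
  have "d_r X P f r y z = Inf (Fr y z ` X)" by (simp only: d_r_def eq)
  also have "Inf (Fr y z ` X) = Fr y z (prox y z)"
    using prox[OF y] by (intro cInf_eq_minimum) auto
  finally show ?thesis .
qed

lemma d_r_le:
  assumes y: "y \<in> Y" and q: "q \<in> X"
  shows "d_r X P f r y z \<le> Fr y z q"
  using d_r_eq[OF y] prox(2)[OF y q] by simp

lemma norm_diff_sq: "(norm (a - b))\<^sup>2 = (norm a)\<^sup>2 - 2 * (a \<bullet> b) + (norm (b::'a::real_inner))\<^sup>2"
  unfolding power2_norm_eq_inner by (simp add: inner_diff_left inner_diff_right inner_commute)

lemma quad_id:
  "r / 2 * (norm (q - z'))\<^sup>2 - r / 2 * (norm (q - z))\<^sup>2 = (r *\<^sub>R (z - q)) \<bullet> (z' - z) + r / 2 * (norm (z' - z))\<^sup>2"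
proof -
  have "q - z' = (q - z) - (z' - z)" by simp
  then have e1: "(norm (q - z'))\<^sup>2 = (norm (q - z))\<^sup>2 - 2 * ((q - z) \<bullet> (z' - z)) + (norm (z' - z))\<^sup>2"
    using norm_diff_sq[of "q - z" "z' - z"] by simp
  have e2: "(r *\<^sub>R (z - q)) \<bullet> (z' - z) = - (r * ((q - z) \<bullet> (z' - z)))"
  proof -
    have "z - q = - (q - z)" by simp
    then show ?thesis by (simp only: inner_scaleR_left inner_minus_left)
  qed
  have *: "\<And>A B C D::real. A = B - 2 * C + D \<Longrightarrow> r / 2 * A - r / 2 * B = - (r * C) + r / 2 * D"
    by (simp only:) (simp add: algebra_simps)
  show ?thesis unfolding e2 by (rule *[OF e1])
qed

lemma d_r_quad:
  assumes y: "y \<in> Y"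
  shows "\<bar>d_r X P f r y z' - d_r X P f r y z - (r *\<^sub>R (z - prox y z)) \<bullet> (z' - z)\<bar>
           \<le> (r / 2 + r\<^sup>2 / (r - \<rho>)) * (norm (z' - z))\<^sup>2"
proof -
  define p where "p = prox y z"
  define q where "q = prox y z'"
  have pq: "p \<in> X" "q \<in> X" using prox[OF y] by (auto simp: p_def q_def)
  have mu: "0 < r - \<rho>" using rho by simp
  have up: "d_r X P f r y z' - d_r X P f r y z - (r *\<^sub>R (z - p)) \<bullet> (z' - z) \<le> r / 2 * (norm (z' - z))\<^sup>2"
  proof -
    have a: "d_r X P f r y z' \<le> Fexp P f p y + r / 2 * (norm (p - z'))\<^sup>2" using d_r_le[OF y pq(1), of z'] unfolding Fr_def .
    have b: "d_r X P f r y z = Fexp P f p y + r / 2 * (norm (p - z))\<^sup>2" using d_r_eq[OF y, of z] unfolding Fr_def p_def .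
    show ?thesis using a b quad_id[of p z' z] by linarith
  qed
  have lo1: "(r *\<^sub>R (z - q)) \<bullet> (z' - z) + r / 2 * (norm (z' - z))\<^sup>2 \<le> d_r X P f r y z' - d_r X P f r y z"
  proof -
    have a: "d_r X P f r y z \<le> Fexp P f q y + r / 2 * (norm (q - z))\<^sup>2" using d_r_le[OF y pq(2), of z] unfolding Fr_def .
    have b: "d_r X P f r y z' = Fexp P f q y + r / 2 * (norm (q - z'))\<^sup>2" using d_r_eq[OF y, of z'] unfolding Fr_def q_def .
    show ?thesis using a b quad_id[of q z' z] by linarith
  qed
  have "(r *\<^sub>R (z - q)) \<bullet> (z' - z) - (r *\<^sub>R (z - p)) \<bullet> (z' - z) = r * ((p - q) \<bullet> (z' - z))"
    by (simp add: inner_diff_left algebra_simps)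
  moreover have "- (norm (p - q) * norm (z' - z)) \<le> (p - q) \<bullet> (z' - z)"
    using Cauchy_Schwarz_ineq2[of "p - q" "z' - z"] by (simp add: abs_le_iff)
  moreover have "norm (p - q) \<le> r / (r - \<rho>) * norm (z' - z)"
    using prox_lip[OF y, of z z'] mu by (simp add: p_def q_def field_simps norm_minus_commute)
  ultimately have "- (r * (r / (r - \<rho>) * norm (z' - z)) * norm (z' - z)) \<le> (r *\<^sub>R (z - q)) \<bullet> (z' - z) - (r *\<^sub>R (z - p)) \<bullet> (z' - z)"
  proof -
    assume e: "(r *\<^sub>R (z - q)) \<bullet> (z' - z) - (r *\<^sub>R (z - p)) \<bullet> (z' - z) = r * ((p - q) \<bullet> (z' - z))"
      and c: "- (norm (p - q) * norm (z' - z)) \<le> (p - q) \<bullet> (z' - z)"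
      and l: "norm (p - q) \<le> r / (r - \<rho>) * norm (z' - z)"
    have "norm (p - q) * norm (z' - z) \<le> r / (r - \<rho>) * norm (z' - z) * norm (z' - z)"
      using l by (rule mult_right_mono) simp
    then have "- (r / (r - \<rho>) * norm (z' - z) * norm (z' - z)) \<le> (p - q) \<bullet> (z' - z)" using c by linarith
    then have "r * - (r / (r - \<rho>) * norm (z' - z) * norm (z' - z)) \<le> r * ((p - q) \<bullet> (z' - z))"
      using rho by (intro mult_left_mono) auto
    then show ?thesis unfolding e by simp
  qed
  then have lo: "- (r\<^sup>2 / (r - \<rho>) * (norm (z' - z))\<^sup>2) \<le> d_r X P f r y z' - d_r X P f r y z - (r *\<^sub>R (z - p)) \<bullet> (z' - z)"
  proof -
    assume h: "- (r * (r / (r - \<rho>) * norm (z' - z)) * norm (z' - z)) \<le> (r *\<^sub>R (z - q)) \<bullet> (z' - z) - (r *\<^sub>R (z - p)) \<bullet> (z' - z)"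
    have "r * (r / (r - \<rho>) * norm (z' - z)) * norm (z' - z) = r\<^sup>2 / (r - \<rho>) * (norm (z' - z))\<^sup>2"
      by (simp add: power2_eq_square)
    moreover have "0 \<le> r / 2 * (norm (z' - z))\<^sup>2" using rho by simp
    ultimately show ?thesis using h lo1 by linarith
  qed
  have "0 \<le> r\<^sup>2 / (r - \<rho>) * (norm (z' - z))\<^sup>2" using mu by simp
  moreover have "0 \<le> r / 2 * (norm (z' - z))\<^sup>2" using rho by simp
  moreover have "(r / 2 + r\<^sup>2 / (r - \<rho>)) * (norm (z' - z))\<^sup>2 = r / 2 * (norm (z' - z))\<^sup>2 + r\<^sup>2 / (r - \<rho>) * (norm (z' - z))\<^sup>2"
    by (rule distrib_right)
  ultimately show ?thesis using up lo unfolding p_def[symmetric] abs_le_iff by linarith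
qed

lemma d_r_deriv:
  assumes y: "y \<in> Y"
  shows "(d_r X P f r y has_derivative (\<lambda>h. (r *\<^sub>R (z - prox y z)) \<bullet> h)) (at z)"
  unfolding has_derivative_iff_norm
proof
  show "bounded_linear (\<lambda>h. (r *\<^sub>R (z - prox y z)) \<bullet> h)" by (rule bounded_linear_inner_right)
  define C where "C = r / 2 + r\<^sup>2 / (r - \<rho>)"
  show "((\<lambda>z'. norm (d_r X P f r y z' - d_r X P f r y z - (r *\<^sub>R (z - prox y z)) \<bullet> (z' - z)) / norm (z' - z)) \<longlongrightarrow> 0) (at z)"
  proof (rule Lim_null_comparison)
    show "\<forall>\<^sub>F z' in at z. norm (norm (d_r X P f r y z' - d_r X P f r y z - (r *\<^sub>R (z - prox y z)) \<bullet> (z' - z)) / norm (z' - z)) \<le> C * norm (z' - z)"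
    proof (rule always_eventually, rule allI)
      fix z'
      have q: "\<bar>d_r X P f r y z' - d_r X P f r y z - (r *\<^sub>R (z - prox y z)) \<bullet> (z' - z)\<bar> \<le> C * (norm (z' - z))\<^sup>2"
        using d_r_quad[OF y, of z' z] by (simp add: C_def)
      show "norm (norm (d_r X P f r y z' - d_r X P f r y z - (r *\<^sub>R (z - prox y z)) \<bullet> (z' - z)) / norm (z' - z)) \<le> C * norm (z' - z)"
      proof (cases "z' = z")
        case True then show ?thesis by simp
      next
        case False
        then have n: "0 < norm (z' - z)" by simp
        show ?thesis using q n by (simp add: divide_le_eq power2_eq_square mult.assoc)
      qed
    qed
    have "((\<lambda>z'. C * norm (z' - z)) \<longlongrightarrow> C * norm (z - z)) (at z)"
      by (intro tendsto_intros)
    then show "((\<lambda>z'. C * norm (z' - z)) \<longlongrightarrow> 0) (at z)" by simp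
  qed
qed

lemma grad_d_r:
  assumes y: "y \<in> Y"
  shows "grad (\<lambda>z. d_r X P f r y z) z = r *\<^sub>R (z - prox y z)"
  unfolding grad_def
proof (rule the_equality)
  show "(d_r X P f r y has_derivative (\<lambda>h. (r *\<^sub>R (z - prox y z)) \<bullet> h)) (at z)" by (rule d_r_deriv[OF y])
  fix v assume "((\<lambda>z. d_r X P f r y z) has_derivative (\<lambda>h. v \<bullet> h)) (at z)"
  then have "(\<lambda>h. v \<bullet> h) = (\<lambda>h. (r *\<^sub>R (z - prox y z)) \<bullet> h)"
    using has_derivative_unique[OF _ d_r_deriv[OF y]] by blast
  then have "v \<bullet> (v - r *\<^sub>R (z - prox y z)) = (r *\<^sub>R (z - prox y z)) \<bullet> (v - r *\<^sub>R (z - prox y z))" by (rule fun_cong)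
  then have "(v - r *\<^sub>R (z - prox y z)) \<bullet> (v - r *\<^sub>R (z - prox y z)) = 0" by (simp add: inner_diff_left)
  then show "v = r *\<^sub>R (z - prox y z)" by simp
qed

lemma gF_lipx:
  assumes "x1 \<in> X" "x2 \<in> X" "y \<in> Y"
  shows "norm (gF x1 y - gF x2 y) \<le> Lx * norm (x1 - x2)"
proof -
  have i1: "integrable P (gx x1 y)" using unb[OF assms(1,3)] by blast
  have i2: "integrable P (gx x2 y)" using unb[OF assms(2,3)] by blast
  have i: "integrable P (\<lambda>s. gx x1 y s - gx x2 y s)" using i1 i2 by (rule Bochner_Integration.integrable_diff)
  have e: "gF x1 y - gF x2 y = (\<integral>s. gx x1 y s - gx x2 y s \<partial>P)"
    unfolding gF_def by (rule Bochner_Integration.integral_diff[symmetric, OF i1 i2])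
  have "ennreal ((norm (gF x1 y - gF x2 y))\<^sup>2) \<le> (\<integral>\<^sup>+s. ennreal ((norm (gx x1 y s - gx x2 y s))\<^sup>2) \<partial>P)"
    unfolding e by (rule jensen_sq[OF Pp i])
  also have "\<dots> \<le> ennreal (Lx\<^sup>2 * (norm (x1 - x2))\<^sup>2)" by (rule lgx[OF assms])
  finally have "(norm (gF x1 y - gF x2 y))\<^sup>2 \<le> Lx\<^sup>2 * (norm (x1 - x2))\<^sup>2" by (subst (asm) ennreal_le_iff) auto
  then have "(norm (gF x1 y - gF x2 y))\<^sup>2 \<le> (Lx * norm (x1 - x2))\<^sup>2" by (simp only: power_mult_distrib)
  then show ?thesis by (rule power2_le_imp_le) (simp add: LL)
qed

lemma gF_lipy:
  assumes "x \<in> X" "y1 \<in> Y" "y2 \<in> Y"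
  shows "norm (gF x y1 - gF x y2) \<le> Ly * norm (y1 - y2)"
proof -
  have i1: "integrable P (gx x y1)" using unb[OF assms(1,2)] by blast
  have i2: "integrable P (gx x y2)" using unb[OF assms(1,3)] by blast
  have i: "integrable P (\<lambda>s. gx x y1 s - gx x y2 s)" using i1 i2 by (rule Bochner_Integration.integrable_diff)
  have e: "gF x y1 - gF x y2 = (\<integral>s. gx x y1 s - gx x y2 s \<partial>P)"
    unfolding gF_def by (rule Bochner_Integration.integral_diff[symmetric, OF i1 i2])
  have "ennreal ((norm (gF x y1 - gF x y2))\<^sup>2) \<le> (\<integral>\<^sup>+s. ennreal ((norm (gx x y1 s - gx x y2 s))\<^sup>2) \<partial>P)"
    unfolding e by (rule jensen_sq[OF Pp i])
  also have "\<dots> \<le> ennreal (Ly\<^sup>2 * (norm (y1 - y2))\<^sup>2)" by (rule lgy[OF assms])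
  finally have "(norm (gF x y1 - gF x y2))\<^sup>2 \<le> Ly\<^sup>2 * (norm (y1 - y2))\<^sup>2" by (subst (asm) ennreal_le_iff) auto
  then have "(norm (gF x y1 - gF x y2))\<^sup>2 \<le> (Ly * norm (y1 - y2))\<^sup>2" by (simp only: power_mult_distrib)
  then show ?thesis by (rule power2_le_imp_le) (simp add: LL)
qed


lemma sq_bound4:
  fixes a b c d :: real
  shows "4 * (a + b + c + d)\<^sup>2 \<le> 12 * b\<^sup>2 + 18 * (a\<^sup>2 + c\<^sup>2 + d\<^sup>2)"
proof -
  have "12 * b\<^sup>2 + 18 * (a\<^sup>2 + c\<^sup>2 + d\<^sup>2) - 4 * (a + b + c + d)\<^sup>2
        = 8 * (b - (a + c + d) / 2)\<^sup>2 + 6 * ((a - c)\<^sup>2 + (a - d)\<^sup>2 + (c - d)\<^sup>2)"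
    by (simp add: power2_eq_square algebra_simps)
  moreover have "0 \<le> 8 * (b - (a + c + d) / 2)\<^sup>2 + 6 * ((a - c)\<^sup>2 + (a - d)\<^sup>2 + (c - d)\<^sup>2)" by simp
  ultimately show ?thesis by linarith
qed

lemma step_ineq:
  assumes x: "x \<in> X" and y: "y \<in> Y" and y': "y' \<in> Y" and a: "0 < \<alpha>" and r2: "2 * \<rho> \<le> r"
    and x': "x' = closest_point X (x - \<alpha> *\<^sub>R (G + r *\<^sub>R (x - z)))"
  shows "(norm (r *\<^sub>R (x' - prox y' x')))\<^sup>2 \<le> 18 * ((1 / \<alpha> + Lx + r) * norm (x' - x))\<^sup>2
           + 12 * (r * norm (x' - z))\<^sup>2 + 18 * (Ly * norm (y' - y))\<^sup>2 + 18 * (norm (G - gF x y))\<^sup>2"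
proof -
  define p where "p = prox y' x'"
  define u where "u = x' - p"
  define e where "e = G - gF x y"
  define D where "D = gF x' y' - gF x y"
  define a0 where "a0 = x - \<alpha> *\<^sub>R (G + r *\<^sub>R (x - z))"
  have x'X: "x' \<in> X" unfolding x' using X by (intro closest_point_in_set) auto
  have pX: "p \<in> X" unfolding p_def by (rule prox(1)[OF y'])
  have r0: "0 < r" using rho by simp
  have uu: "u \<bullet> u = (norm u)\<^sup>2" by (simp add: power2_norm_eq_inner)
  have foc: "0 \<le> (gF p y' + r *\<^sub>R (p - x')) \<bullet> (x' - p)"
    using prox_foc[OF y' x'X, of x'] by (simp add: p_def)
  have "(gF p y' + r *\<^sub>R (p - x')) \<bullet> (x' - p) = gF p y' \<bullet> u - r * (u \<bullet> u)"
  proof -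
    have "p - x' = - u" by (simp add: u_def)
    then show ?thesis by (simp add: inner_add_left inner_diff_left u_def[symmetric])
  qed
  with foc have f1: "r * (norm u)\<^sup>2 \<le> gF p y' \<bullet> u" using uu by simp
  have "inner (a0 - x') (p - x') \<le> 0"
    unfolding x' a0_def
    by (rule any_closest_point_dot[OF X(3) X(2)]) (use X pX closest_point_exists(2)[OF X(2) X(1)] x'X[unfolded x'] in auto)
  then have pr: "0 \<le> (a0 - x') \<bullet> u" unfolding u_def
    by (metis inner_minus_right minus_diff_eq neg_le_0_iff_le)
  have "(a0 - x') \<bullet> u = (x - x') \<bullet> u - \<alpha> * (G \<bullet> u) - \<alpha> * (r * ((x - z) \<bullet> u))"
    unfolding a0_def by (simp add: inner_diff_left inner_add_left algebra_simps)
  with pr have pr2: "\<alpha> * (G \<bullet> u) \<le> (x - x') \<bullet> u - \<alpha> * (r * ((x - z) \<bullet> u))" by linarith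
  have wm: "- \<rho> * (norm u)\<^sup>2 \<le> (gF x' y' - gF p y') \<bullet> u"
    unfolding u_def by (rule WM[OF x'X pX y'])
  have gsplit: "gF x' y' \<bullet> u = G \<bullet> u - e \<bullet> u + D \<bullet> u"
    by (simp add: e_def D_def inner_diff_left)
  have m1: "(r - \<rho>) * (norm u)\<^sup>2 \<le> G \<bullet> u - e \<bullet> u + D \<bullet> u"
    using f1 wm gsplit by (simp add: inner_diff_left algebra_simps)
  have m2: "\<alpha> * ((r - \<rho>) * (norm u)\<^sup>2) \<le> (x - x') \<bullet> u - \<alpha> * (r * ((x - z) \<bullet> u)) - \<alpha> * (e \<bullet> u) + \<alpha> * (D \<bullet> u)"
  proof -
    have "\<alpha> * ((r - \<rho>) * (norm u)\<^sup>2) \<le> \<alpha> * (G \<bullet> u - e \<bullet> u + D \<bullet> u)"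
      using m1 a by (intro mult_left_mono) auto
    then show ?thesis using pr2 by (simp add: algebra_simps)
  qed
  define nu where "nu = norm u"
  have cs1: "(x - x') \<bullet> u \<le> norm (x' - x) * nu" unfolding nu_def
    using norm_cauchy_schwarz[of "x - x'" u] by (simp add: norm_minus_commute)
  have cs2: "- ((x - z) \<bullet> u) \<le> norm (x - z) * nu" unfolding nu_def
    using norm_cauchy_schwarz[of "z - x" u] by (simp add: norm_minus_commute inner_diff_left)
  have cs3: "- (e \<bullet> u) \<le> norm e * nu" unfolding nu_def
    using norm_cauchy_schwarz[of "- e" u] by simp
  have cs4: "D \<bullet> u \<le> norm D * nu" unfolding nu_def
    using norm_cauchy_schwarz[of D u] by simp
  have m3: "\<alpha> * ((r - \<rho>) * nu\<^sup>2) \<le> (norm (x' - x) + \<alpha> * (r * norm (x - z)) + \<alpha> * norm e + \<alpha> * norm D) * nu"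
  proof -
    have "\<alpha> * (r * - ((x - z) \<bullet> u)) \<le> \<alpha> * (r * (norm (x - z) * nu))"
      using cs2 a r0 by (intro mult_left_mono) auto
    moreover have "\<alpha> * - (e \<bullet> u) \<le> \<alpha> * (norm e * nu)" using cs3 a by (intro mult_left_mono) auto
    moreover have "\<alpha> * (D \<bullet> u) \<le> \<alpha> * (norm D * nu)" using cs4 a by (intro mult_left_mono) auto
    ultimately show ?thesis using m2 cs1 unfolding nu_def[symmetric] by (simp add: algebra_simps)
  qed
  have nD: "norm D \<le> Lx * norm (x' - x) + Ly * norm (y' - y)"
  proof -
    have "D = (gF x' y' - gF x y') + (gF x y' - gF x y)" by (simp add: D_def)
    then have "norm D \<le> norm (gF x' y' - gF x y') + norm (gF x y' - gF x y)" by (metis norm_triangle_ineq)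
    then show ?thesis using gF_lipx[OF x'X x y'] gF_lipy[OF x y' y] by linarith
  qed
  have nxz: "norm (x - z) \<le> norm (x' - x) + norm (x' - z)"
    using norm_triangle_ineq[of "x - x'" "x' - z"] by (simp add: norm_minus_commute)
  define A where "A = (1 / \<alpha> + Lx + r) * norm (x' - x) + r * norm (x' - z) + Ly * norm (y' - y) + norm e"
  have A0: "0 \<le> A" unfolding A_def using a r0 LL by (intro add_nonneg_nonneg mult_nonneg_nonneg) auto
  have key: "(r - \<rho>) * nu \<le> A"
  proof (cases "nu = 0")
    case True then show ?thesis using A0 by simp
  next
    case False
    then have nu0: "0 < nu" by (simp add: nu_def)
    have "\<alpha> * ((r - \<rho>) * nu) * nu \<le> (norm (x' - x) + \<alpha> * (r * norm (x - z)) + \<alpha> * norm e + \<alpha> * norm D) * nu"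
      using m3 by (simp add: power2_eq_square mult.assoc)
    then have "\<alpha> * ((r - \<rho>) * nu) \<le> norm (x' - x) + \<alpha> * (r * norm (x - z)) + \<alpha> * norm e + \<alpha> * norm D"
      using nu0 by simp
    also have "\<dots> \<le> norm (x' - x) + \<alpha> * (r * (norm (x' - x) + norm (x' - z))) + \<alpha> * norm e + \<alpha> * (Lx * norm (x' - x) + Ly * norm (y' - y))"
      using nD nxz a r0 by (intro add_mono mult_left_mono order_refl) auto
    also have "\<dots> = \<alpha> * A"
      unfolding A_def using a by (simp add: field_simps)
    finally show ?thesis using a by simp
  qed
  have "r * nu \<le> 2 * A"
  proof -
    have "(2 * \<rho>) * nu \<le> r * nu" using r2 by (intro mult_right_mono) (auto simp: nu_def)
    then have "r * nu \<le> 2 * ((r - \<rho>) * nu)" by (simp add: algebra_simps)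
    then show ?thesis using key by linarith
  qed
  then have "(r * nu)\<^sup>2 \<le> (2 * A)\<^sup>2" using r0 by (intro power_mono) (auto simp: nu_def)
  also have "(2 * A)\<^sup>2 = 4 * (((1 / \<alpha> + Lx + r) * norm (x' - x)) + (r * norm (x' - z)) + (Ly * norm (y' - y)) + norm e)\<^sup>2"
  proof -
    have "(2 * A)\<^sup>2 = 4 * A\<^sup>2" by (simp add: power2_eq_square)
    then show ?thesis unfolding A_def .
  qed
  also have "\<dots> \<le> 12 * (r * norm (x' - z))\<^sup>2 + 18 * (((1 / \<alpha> + Lx + r) * norm (x' - x))\<^sup>2 + (Ly * norm (y' - y))\<^sup>2 + (norm e)\<^sup>2)"
    by (rule sq_bound4)
  finally have fin: "(r * nu)\<^sup>2 \<le> 12 * (r * norm (x' - z))\<^sup>2 + 18 * (((1 / \<alpha> + Lx + r) * norm (x' - x))\<^sup>2 + (Ly * norm (y' - y))\<^sup>2 + (norm e)\<^sup>2)" .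
  have "norm (r *\<^sub>R (x' - prox y' x')) = r * nu" using r0 by (simp add: nu_def u_def p_def)
  then show ?thesis using fin unfolding e_def by simp
qed

end

lemma bm_fst[measurable (raw)]: "g \<in> borel_measurable N \<Longrightarrow> (\<lambda>w. fst (g w)) \<in> borel_measurable N"
  by (rule measurable_compose[of g N borel fst]) (auto intro!: borel_measurable_continuous_onI continuous_intros)

lemma bm_snd[measurable (raw)]: "g \<in> borel_measurable N \<Longrightarrow> (\<lambda>w. snd (g w)) \<in> borel_measurable N"
  by (rule measurable_compose[of g N borel snd]) (auto intro!: borel_measurable_continuous_onI continuous_intros)

lemma bm_cp:
  assumes "convex S" "closed S" "S \<noteq> {}" "g \<in> borel_measurable N"
  shows "(\<lambda>w. closest_point S (g w)) \<in> borel_measurable N"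
  by (rule measurable_compose[OF assms(4)]) (rule borel_measurable_continuous_onI[OF continuous_on_closest_point[OF assms(1-3)]])

locale algo =
  fixes X :: "'x::euclidean_space set" and Y :: "'y::euclidean_space set"
    and gx :: "'x \<Rightarrow> 'y \<Rightarrow> 'xi \<Rightarrow> 'x" and gy :: "'x \<Rightarrow> 'y \<Rightarrow> 'xi \<Rightarrow> 'y" and s :: "'xi setting"
    and T M :: nat and \<alpha>x \<alpha>y \<beta> r :: real and x0 :: 'x and y0 :: 'y and z0 :: 'x and P :: "'xi measure"
  assumes X: "X \<noteq> {}" "closed X" "convex X" and Y: "Y \<noteq> {}" "closed Y" "convex Y"
    and meas_gx: "(\<lambda>(x, y, z). gx x y z) \<in> borel_measurable (borel \<Otimes>\<^sub>M (borel \<Otimes>\<^sub>M P))"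
    and meas_gy: "(\<lambda>(x, y, z). gy x y z) \<in> borel_measurable (borel \<Otimes>\<^sub>M (borel \<Otimes>\<^sub>M P))"
    and fs_space: "\<And>ss. s = FiniteSum ss \<Longrightarrow> space P = UNIV"
begin

definition st where "st t n = alg X Y gx gy s (\<lambda>k \<tau> i. t (k, \<tau>, i)) T M \<alpha>x \<alpha>y \<beta> r x0 y0 z0 n"

definition cnt where "cnt m = (if m mod T = 0 then (case s of Online B \<Rightarrow> B | FiniteSum _ \<Rightarrow> 0) else M)"
definition U where "U m = {(m div T, m mod T, i) | i. i < cnt m}"

definition nxt where "nxt t n S = (let x = fst S; y = fst (snd S); z = fst (snd (snd S));
      Gx = fst (snd (snd (snd S))); Gy = snd (snd (snd (snd S)));
      x' = closest_point X (x - \<alpha>x *\<^sub>R (Gx + r *\<^sub>R (x - z)));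
      y' = closest_point Y (y + \<alpha>y *\<^sub>R Gy);
      z' = z + \<beta> *\<^sub>R (x' - z); k = Suc n div T; \<tau> = Suc n mod T
   in if \<tau> = 0 then (x', y', z', init_est s gx (\<lambda>i. t (k, 0, i)) x' y', init_est s gy (\<lambda>i. t (k, 0, i)) x' y')
      else (x', y', z',
            (1 / real M) *\<^sub>R (\<Sum>i<M. gx x' y' (t (k, \<tau>, i)) - gx x y (t (k, \<tau>, i))) + Gx,
            (1 / real M) *\<^sub>R (\<Sum>i<M. gy x' y' (t (k, \<tau>, i)) - gy x y (t (k, \<tau>, i))) + Gy))"

lemma st_0: "st t 0 = (x0, y0, z0, init_est s gx (\<lambda>i. t (0, 0, i)) x0 y0, init_est s gy (\<lambda>i. t (0, 0, i)) x0 y0)"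
  by (simp add: st_def)

lemma st_Suc: "st t (Suc n) = nxt t n (st t n)"
proof (cases "st t n")
  case (fields x y z Gx Gy)
  then show ?thesis unfolding st_def nxt_def by (simp add: Let_def)
qed

lemma init_est_cong:
  assumes "\<And>i. (case s of Online B \<Rightarrow> i < B | FiniteSum _ \<Rightarrow> False) \<Longrightarrow> smp i = smp' i"
  shows "init_est s g smp x y = init_est s g smp' x y"
  using assms by (cases s) (auto simp: init_est_def intro!: sum.cong)

lemma nxt_cong:
  assumes "\<And>j. j \<in> U (Suc n) \<Longrightarrow> t j = t' j"
  shows "nxt t n S = nxt t' n S"
proof (cases "Suc n mod T = 0")
  case True
  have "\<And>i. (case s of Online B \<Rightarrow> i < B | FiniteSum _ \<Rightarrow> False) \<Longrightarrow> t (Suc n div T, 0, i) = t' (Suc n div T, 0, i)"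
    using assms True unfolding U_def cnt_def by (auto split: setting.splits)
  then show ?thesis using True unfolding nxt_def Let_def
    by (simp add: init_est_cong[of "\<lambda>i. t (Suc n div T, 0, i)" "\<lambda>i. t' (Suc n div T, 0, i)"])
next
  case False
  have "\<And>i. i < M \<Longrightarrow> t (Suc n div T, Suc n mod T, i) = t' (Suc n div T, Suc n mod T, i)"
    using assms False by (auto simp: U_def cnt_def)
  then show ?thesis using False unfolding nxt_def Let_def by simp
qed

lemma st_local:
  assumes "\<And>m j. m \<le> n \<Longrightarrow> j \<in> U m \<Longrightarrow> t j = t' j"
  shows "st t n = st t' n"
  using assms
proof (induction n)
  case 0
  have "\<And>i. (case s of Online B \<Rightarrow> i < B | FiniteSum _ \<Rightarrow> False) \<Longrightarrow> t (0, 0, i) = t' (0, 0, i)"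
    using 0 unfolding U_def cnt_def by (auto split: setting.splits)
  then show ?case unfolding st_0
    by (simp add: init_est_cong[of "\<lambda>i. t (0, 0, i)" "\<lambda>i. t' (0, 0, i)"])
next
  case (Suc n)
  have "st t n = st t' n" by (rule Suc.IH) (meson Suc.prems le_SucI)
  moreover have "nxt t n (st t' n) = nxt t' n (st t' n)" using Suc.prems by (intro nxt_cong) auto
  ultimately show ?case by (simp add: st_Suc)
qed

lemma gx_meas[measurable (raw)]:
  assumes "f1 \<in> borel_measurable N" "f2 \<in> borel_measurable N" "f3 \<in> measurable N P"
  shows "(\<lambda>w. gx (f1 w) (f2 w) (f3 w)) \<in> borel_measurable N"
proof -
  have "(\<lambda>w. (f1 w, f2 w, f3 w)) \<in> measurable N (borel \<Otimes>\<^sub>M (borel \<Otimes>\<^sub>M P))"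
    using assms by (intro measurable_Pair) auto
  from measurable_compose[OF this meas_gx] show ?thesis by simp
qed

lemma gy_meas[measurable (raw)]:
  assumes "f1 \<in> borel_measurable N" "f2 \<in> borel_measurable N" "f3 \<in> measurable N P"
  shows "(\<lambda>w. gy (f1 w) (f2 w) (f3 w)) \<in> borel_measurable N"
proof -
  have "(\<lambda>w. (f1 w, f2 w, f3 w)) \<in> measurable N (borel \<Otimes>\<^sub>M (borel \<Otimes>\<^sub>M P))"
    using assms by (intro measurable_Pair) auto
  from measurable_compose[OF this meas_gy] show ?thesis by simp
qed

lemma init_meas:
  assumes f1: "f1 \<in> borel_measurable N" and f2: "f2 \<in> borel_measurable N"
    and sm: "\<And>i. (case s of Online B \<Rightarrow> i < B | FiniteSum _ \<Rightarrow> False) \<Longrightarrow> (\<lambda>w. smp w i) \<in> measurable N P"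
  shows "(\<lambda>w. init_est s gx (smp w) (f1 w) (f2 w)) \<in> borel_measurable N"
    and "(\<lambda>w. init_est s gy (smp w) (f1 w) (f2 w)) \<in> borel_measurable N"
proof -
  have "(\<lambda>w. init_est s gx (smp w) (f1 w) (f2 w)) \<in> borel_measurable N \<and> (\<lambda>w. init_est s gy (smp w) (f1 w) (f2 w)) \<in> borel_measurable N"
  proof (cases s)
    case (Online B)
    have [measurable]: "\<And>i. i < B \<Longrightarrow> (\<lambda>w. smp w i) \<in> measurable N P" using sm Online by auto
    show ?thesis unfolding init_est_def Online using f1 f2 by simp
  next
    case (FiniteSum ss)
    have sp: "space P = UNIV" using fs_space FiniteSum by auto
    have e: "\<And>g::'xi \<Rightarrow> 'v::real_normed_vector. sum_list (map g ss) = (\<Sum>i<length ss. g (ss ! i))"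
      by (simp add: sum_list_sum_nth atLeast0LessThan)
    have c: "\<And>i. (\<lambda>w. ss ! i) \<in> measurable N P" using sp by (intro measurable_const) auto
    show ?thesis unfolding init_est_def FiniteSum using f1 f2 c
      by (simp add: e)
  qed
  then show "(\<lambda>w. init_est s gx (smp w) (f1 w) (f2 w)) \<in> borel_measurable N"
    and "(\<lambda>w. init_est s gy (smp w) (f1 w) (f2 w)) \<in> borel_measurable N" by auto
qed


lemma cpX[measurable (raw)]: "g \<in> borel_measurable N \<Longrightarrow> (\<lambda>w. closest_point X (g w)) \<in> borel_measurable N"
  using bm_cp[OF X(3) X(2) X(1)] by blast
lemma cpY[measurable (raw)]: "g \<in> borel_measurable N \<Longrightarrow> (\<lambda>w. closest_point Y (g w)) \<in> borel_measurable N"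
  using bm_cp[OF Y(3) Y(2) Y(1)] by blast

lemma nxt_meas:
  assumes S[measurable]: "S \<in> borel_measurable N" and sm: "\<And>j. j \<in> U (Suc n) \<Longrightarrow> (\<lambda>w. tt w j) \<in> measurable N P"
  shows "(\<lambda>w. nxt (tt w) n (S w)) \<in> borel_measurable N"
proof (cases "Suc n mod T = 0")
  case True
  let ?x' = "\<lambda>w. closest_point X (fst (S w) - \<alpha>x *\<^sub>R (fst (snd (snd (snd (S w)))) + r *\<^sub>R (fst (S w) - fst (snd (snd (S w))))))"
  let ?y' = "\<lambda>w. closest_point Y (fst (snd (S w)) + \<alpha>y *\<^sub>R snd (snd (snd (snd (S w)))))"
  have x'[measurable]: "?x' \<in> borel_measurable N" by measurable
  have y'[measurable]: "?y' \<in> borel_measurable N" by measurable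
  have smp: "\<And>i. (case s of Online B \<Rightarrow> i < B | FiniteSum _ \<Rightarrow> False) \<Longrightarrow> (\<lambda>w. tt w (Suc n div T, 0, i)) \<in> measurable N P"
    using sm True unfolding U_def cnt_def by (auto split: setting.splits)
  note i1 = init_meas(1)[where smp="\<lambda>w i. tt w (Suc n div T, 0, i)", OF x' y' smp]
  note i2 = init_meas(2)[where smp="\<lambda>w i. tt w (Suc n div T, 0, i)", OF x' y' smp]
  show ?thesis unfolding nxt_def Let_def using True i1 i2 by simp
next
  case False
  have [measurable]: "\<And>i. i < M \<Longrightarrow> (\<lambda>w. tt w (Suc n div T, Suc n mod T, i)) \<in> measurable N P"
    using sm False unfolding U_def cnt_def by auto
  show ?thesis unfolding nxt_def Let_def using False by simp
qed

lemma st_meas: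
  assumes "\<And>m j. m \<le> n \<Longrightarrow> j \<in> U m \<Longrightarrow> (\<lambda>w. tt w j) \<in> measurable N P"
  shows "(\<lambda>w. st (tt w) n) \<in> borel_measurable N"
  using assms
proof (induction n)
  case 0
  have smp: "\<And>i. (case s of Online B \<Rightarrow> i < B | FiniteSum _ \<Rightarrow> False) \<Longrightarrow> (\<lambda>w. tt w (0, 0, i)) \<in> measurable N P"
    using 0 unfolding U_def cnt_def by (auto split: setting.splits)
  note i1 = init_meas(1)[of "\<lambda>_. x0" N "\<lambda>_. y0" "\<lambda>w i. tt w (0, 0, i)", OF borel_measurable_const borel_measurable_const smp]
  note i2 = init_meas(2)[of "\<lambda>_. x0" N "\<lambda>_. y0" "\<lambda>w i. tt w (0, 0, i)", OF borel_measurable_const borel_measurable_const smp]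
  show ?case unfolding st_0 using i1 i2 by simp
next
  case (Suc n)
  have "(\<lambda>w. st (tt w) n) \<in> borel_measurable N" by (rule Suc.IH) (use Suc.prems le_SucI in blast)
  then show ?case unfolding st_Suc by (rule nxt_meas) (use Suc.prems in auto)
qed


lemma st_pos_Suc:
  "fst (st t (Suc n)) = closest_point X (fst (st t n) - \<alpha>x *\<^sub>R (fst (snd (snd (snd (st t n)))) + r *\<^sub>R (fst (st t n) - fst (snd (snd (st t n))))))"
  "fst (snd (st t (Suc n))) = closest_point Y (fst (snd (st t n)) + \<alpha>y *\<^sub>R snd (snd (snd (snd (st t n)))))"
  "fst (snd (snd (st t (Suc n)))) = fst (snd (snd (st t n))) + \<beta> *\<^sub>R (fst (st t (Suc n)) - fst (snd (snd (st t n))))"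
  unfolding st_Suc nxt_def Let_def by simp_all

lemma st_in:
  assumes "x0 \<in> X" "y0 \<in> Y"
  shows "fst (st t n) \<in> X \<and> fst (snd (st t n)) \<in> Y"
proof (cases n)
  case 0 then show ?thesis using assms by (simp add: st_0)
next
  case (Suc m) then show ?thesis unfolding Suc st_pos_Suc
    using X Y by (simp add: closest_point_in_set)
qed

lemma st_pos_local:
  assumes "\<And>m' j. m' < m \<Longrightarrow> j \<in> U m' \<Longrightarrow> t j = t' j"
  shows "fst (st t m) = fst (st t' m)" "fst (snd (st t m)) = fst (snd (st t' m))"
proof -
  have "fst (st t m) = fst (st t' m) \<and> fst (snd (st t m)) = fst (snd (st t' m))"
  proof (cases m)
    case 0 then show ?thesis by (simp add: st_0)
  next
    case (Suc n)
    have "st t n = st t' n" by (rule st_local) (use assms Suc less_Suc_eq_le in blast)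
    then show ?thesis unfolding Suc st_pos_Suc by simp
  qed
  then show "fst (st t m) = fst (st t' m)" "fst (snd (st t m)) = fst (snd (st t' m))" by auto
qed

lemma st_G_init:
  assumes "m mod T = 0"
  shows "fst (snd (snd (snd (st t m)))) = init_est s gx (\<lambda>i. t (m div T, 0, i)) (fst (st t m)) (fst (snd (st t m)))"
proof (cases m)
  case 0 then show ?thesis by (simp add: st_0)
next
  case (Suc n)
  show ?thesis using assms unfolding Suc st_Suc nxt_def Let_def by simp
qed

lemma st_G_step:
  assumes "Suc n mod T \<noteq> 0"
  shows "fst (snd (snd (snd (st t (Suc n))))) = (1 / real M) *\<^sub>R (\<Sum>i<M. gx (fst (st t (Suc n))) (fst (snd (st t (Suc n)))) (t (Suc n div T, Suc n mod T, i))
            - gx (fst (st t n)) (fst (snd (st t n))) (t (Suc n div T, Suc n mod T, i))) + fst (snd (snd (snd (st t n))))"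
  using assms unfolding st_pos_Suc(1,2) unfolding st_Suc nxt_def Let_def by simp

end

locale main = algo X Y gx gy s T M \<alpha>x \<alpha>y \<beta> r x0 y0 z0 P + ana X Y P f gx \<rho> r Lx Ly
  for X :: "'x::euclidean_space set" and Y :: "'y::euclidean_space set"
    and gx :: "'x \<Rightarrow> 'y \<Rightarrow> 'xi \<Rightarrow> 'x" and gy :: "'x \<Rightarrow> 'y \<Rightarrow> 'xi \<Rightarrow> 'y" and s :: "'xi setting"
    and T M :: nat and \<alpha>x \<alpha>y \<beta> r :: real and x0 :: 'x and y0 :: 'y and z0 :: 'x and P :: "'xi measure"
    and f :: "'x \<Rightarrow> 'y \<Rightarrow> 'xi \<Rightarrow> real" and \<rho> Lx Ly :: real +
  fixes Omega :: "'w measure" and \<xi> :: "nat \<Rightarrow> nat \<Rightarrow> nat \<Rightarrow> 'w \<Rightarrow> 'xi" and \<sigma>x :: real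
  assumes Om: "prob_space Omega"
    and indep: "prob_space.indep_vars Omega (\<lambda>_. P) (\<lambda>(k, \<tau>, i). \<xi> k \<tau> i) UNIV"
    and sdistr: "\<And>k \<tau> i. distr Omega P (\<xi> k \<tau> i) = P"
    and var_x: "\<And>x y. x \<in> X \<Longrightarrow> y \<in> Y \<Longrightarrow>
        (\<integral>\<^sup>+z. ennreal ((norm (gx x y z - (\<integral>w. gx x y w \<partial>P)))\<^sup>2) \<partial>P) \<le> ennreal (\<sigma>x\<^sup>2)"
    and init: "x0 \<in> X" "y0 \<in> Y"
    and fsP: "\<And>ss. s = FiniteSum ss \<Longrightarrow> ss \<noteq> [] \<and> P = measure_pmf (pmf_of_multiset (mset ss))"
    and onl: "\<And>B. s = Online B \<Longrightarrow> 1 \<le> B"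
    and TM: "1 \<le> T" "T = M"
begin

definition XI where "XI = (\<lambda>(k, \<tau>, i). \<xi> k \<tau> i)"
definition Xi where "Xi \<omega> = (\<lambda>j. XI j \<omega>)"

lemma rv_XI[measurable]: "XI j \<in> measurable Omega P"
  using indep unfolding XI_def prob_space.indep_vars_def[OF Om] by (auto split: prod.split)

lemma split_expect:
  assumes AB: "A \<inter> B = {}" "B \<noteq> {}"
    and Phi[measurable]: "Phi \<in> borel_measurable (PiM A (\<lambda>_. P) \<Otimes>\<^sub>M PiM B (\<lambda>_. P))"
  shows "(\<integral>\<^sup>+\<omega>. Phi (restrict (Xi \<omega>) A, restrict (Xi \<omega>) B) \<partial>Omega)
       = (\<integral>\<^sup>+\<omega>. (\<integral>\<^sup>+t. Phi (restrict (Xi \<omega>) A, t) \<partial>PiM B (\<lambda>_. P)) \<partial>Omega)"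
proof -
  interpret O: prob_space Omega by (rule Om)
  interpret PP: prob_space P by (rule Pp)
  interpret PB: prob_space "PiM B (\<lambda>_. P)" by (rule prob_space_PiM) (rule Pp)
  have ind: "O.indep_vars (\<lambda>_. P) XI UNIV" using indep by (simp add: XI_def)
  let ?rA = "\<lambda>\<omega>. restrict (\<lambda>j. XI j \<omega>) A"
  let ?rB = "\<lambda>\<omega>. restrict (\<lambda>j. XI j \<omega>) B"
  have iv: "O.indep_var (PiM A (\<lambda>_. P)) ?rA (PiM B (\<lambda>_. P)) ?rB"
    by (rule O.indep_var_restrict[OF ind AB(1)]) auto
  have rA[measurable]: "?rA \<in> measurable Omega (PiM A (\<lambda>_. P))" by measurable
  have rB[measurable]: "?rB \<in> measurable Omega (PiM B (\<lambda>_. P))" by measurable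
  have joint: "distr Omega (PiM A (\<lambda>_. P)) ?rA \<Otimes>\<^sub>M distr Omega (PiM B (\<lambda>_. P)) ?rB
      = distr Omega (PiM A (\<lambda>_. P) \<Otimes>\<^sub>M PiM B (\<lambda>_. P)) (\<lambda>\<omega>. (?rA \<omega>, ?rB \<omega>))"
    using iv O.indep_var_distribution_eq by blast
  have indB: "O.indep_vars (\<lambda>_. P) XI B" using ind by (rule O.indep_vars_subset) auto
  have dB: "distr Omega (PiM B (\<lambda>_. P)) ?rB = PiM B (\<lambda>j. distr Omega P (XI j))"
    using O.indep_vars_iff_distr_eq_PiM[of B XI "\<lambda>_. P"] AB(2) indB rv_XI by auto
  also have "\<dots> = PiM B (\<lambda>_. P)"
    by (rule PiM_cong) (auto simp: XI_def sdistr split: prod.split)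
  finally have dB': "distr Omega (PiM B (\<lambda>_. P)) ?rB = PiM B (\<lambda>_. P)" .
  let ?DA = "distr Omega (PiM A (\<lambda>_. P)) ?rA"
  have sets_eq: "sets (?DA \<Otimes>\<^sub>M PiM B (\<lambda>_. P)) = sets (PiM A (\<lambda>_. P) \<Otimes>\<^sub>M PiM B (\<lambda>_. P))"
    by (intro sets_pair_measure_cong) auto
  have Phi': "Phi \<in> borel_measurable (?DA \<Otimes>\<^sub>M PiM B (\<lambda>_. P))"
    using Phi measurable_cong_sets[OF sets_eq refl] by blast
  have "(\<integral>\<^sup>+\<omega>. Phi (?rA \<omega>, ?rB \<omega>) \<partial>Omega)
      = (\<integral>\<^sup>+p. Phi p \<partial>distr Omega (PiM A (\<lambda>_. P) \<Otimes>\<^sub>M PiM B (\<lambda>_. P)) (\<lambda>\<omega>. (?rA \<omega>, ?rB \<omega>)))"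
    by (subst nn_integral_distr) auto
  also have "\<dots> = (\<integral>\<^sup>+p. Phi p \<partial>(?DA \<Otimes>\<^sub>M PiM B (\<lambda>_. P)))"
    unfolding joint[symmetric] dB' ..
  also have "\<dots> = (\<integral>\<^sup>+a. (\<integral>\<^sup>+t. Phi (a, t) \<partial>PiM B (\<lambda>_. P)) \<partial>?DA)"
    by (rule PB.nn_integral_fst[symmetric, OF Phi'])
  also have "\<dots> = (\<integral>\<^sup>+\<omega>. (\<integral>\<^sup>+t. Phi (?rA \<omega>, t) \<partial>PiM B (\<lambda>_. P)) \<partial>Omega)"
  proof -
    have mb: "(\<lambda>a. \<integral>\<^sup>+t. Phi (a, t) \<partial>PiM B (\<lambda>_. P)) \<in> borel_measurable (PiM A (\<lambda>_. P))"
      by (rule PB.borel_measurable_nn_integral_fst[OF Phi])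
    have mb': "(\<lambda>a. \<integral>\<^sup>+t. Phi (a, t) \<partial>PiM B (\<lambda>_. P)) \<in> borel_measurable ?DA" using mb by simp
    show ?thesis using nn_integral_distr[OF rA mb'] by simp
  qed
  finally show ?thesis by (simp add: Xi_def)
qed


definition Sq where "Sq \<omega> n = st (Xi \<omega>) n"
definition err where "err St = fst (snd (snd (snd St))) - gF (fst St) (fst (snd St))"
definition Apast where "Apast m = (\<Union>m'\<in>{..<m}. U m')"
definition merge where "merge A a t = (\<lambda>j. if j \<in> A then a j else t j)"

lemma U_eq: "U m = (\<lambda>i. (m div T, m mod T, i)) ` {..<cnt m}"
  unfolding U_def by auto

lemma finite_U: "finite (U m)" unfolding U_eq by simp

lemma card_U: "card (U m) = cnt m"
  unfolding U_eq by (subst card_image) (auto simp: inj_on_def)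

lemma finite_Apast: "finite (Apast m)" unfolding Apast_def using finite_U by auto

lemma U_mem: "j \<in> U m \<Longrightarrow> j \<in> U m' \<Longrightarrow> m = m'"
  unfolding U_def by auto (metis div_mult_mod_eq)

lemma Apast_disj: "Apast m \<inter> U m = {}"
  unfolding Apast_def using U_mem by fastforce

lemma U_sub_Apast: "m' < m \<Longrightarrow> U m' \<subseteq> Apast m"
  unfolding Apast_def by auto

lemma Sq_inXY: "fst (Sq \<omega> n) \<in> X" "fst (snd (Sq \<omega> n)) \<in> Y"
  using st_in[OF init] unfolding Sq_def by auto

lemma st_inXY: "fst (st t n) \<in> X" "fst (snd (st t n)) \<in> Y"
  using st_in[OF init] by auto

lemma Sq_meas[measurable]: "(\<lambda>\<omega>. Sq \<omega> n) \<in> borel_measurable Omega"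
  unfolding Sq_def by (rule st_meas) (simp add: Xi_def)

lemma gF_meas[measurable (raw)]:
  assumes "f1 \<in> borel_measurable N" "f2 \<in> borel_measurable N"
  shows "(\<lambda>w. gF (f1 w) (f2 w)) \<in> borel_measurable N"
proof -
  interpret PP: prob_space P by (rule Pp)
  have "(\<lambda>(xy, z). gx (fst xy) (snd xy) z) \<in> borel_measurable (borel \<Otimes>\<^sub>M P)"
  proof -
    have "(\<lambda>p. gx (fst (fst p)) (snd (fst p)) (snd p)) \<in> borel_measurable (borel \<Otimes>\<^sub>M P)"
      by (intro gx_meas bm_fst bm_snd measurable_fst measurable_snd)
    then show ?thesis by (simp add: case_prod_beta')
  qed
  then have "(\<lambda>xy. \<integral>z. gx (fst xy) (snd xy) z \<partial>P) \<in> borel_measurable borel"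
    by (rule PP.borel_measurable_lebesgue_integral)
  then have "(\<lambda>xy. gF (fst xy) (snd xy)) \<in> borel_measurable borel" by (simp add: gF_def)
  from measurable_compose[OF borel_measurable_Pair[OF assms] this] show ?thesis by simp
qed

lemma err_meas[measurable]: "(\<lambda>\<omega>. err (Sq \<omega> n)) \<in> borel_measurable Omega"
  unfolding err_def by measurable

lemma merge_agree:
  assumes "t \<in> space (PiM (U m) (\<lambda>_. P))"
  shows "\<And>j. j \<in> Apast m \<Longrightarrow> merge (Apast m) (restrict (Xi \<omega>) (Apast m)) t j = Xi \<omega> j"
    and "\<And>j. j \<in> U m \<Longrightarrow> merge (Apast m) (restrict (Xi \<omega>) (Apast m)) t j = t j"
  using Apast_disj by (auto simp: merge_def)

lemma merge_Sq:
  "st (merge (Apast m) (restrict (Xi \<omega>) (Apast m)) (restrict (Xi \<omega>) (U m))) m = Sq \<omega> m"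
  unfolding Sq_def
proof (rule st_local)
  fix m' j assume m': "m' \<le> m" and j: "j \<in> U m'"
  show "merge (Apast m) (restrict (Xi \<omega>) (Apast m)) (restrict (Xi \<omega>) (U m)) j = Xi \<omega> j"
  proof (cases "m' = m")
    case True then show ?thesis using j by (simp add: merge_def)
  next
    case False then have "j \<in> Apast m" using m' j U_sub_Apast[of m' m] by auto
    then show ?thesis by (simp add: merge_def)
  qed
qed

lemma merge_meas:
  "(\<lambda>p. st (merge (Apast m) (fst p) (snd p)) m) \<in> borel_measurable (PiM (Apast m) (\<lambda>_. P) \<Otimes>\<^sub>M PiM (U m) (\<lambda>_. P))"
proof (rule st_meas)
  fix m' j assume m': "m' \<le> m" and j: "j \<in> U m'"
  show "(\<lambda>p. merge (Apast m) (fst p) (snd p) j) \<in> measurable (PiM (Apast m) (\<lambda>_. P) \<Otimes>\<^sub>M PiM (U m) (\<lambda>_. P)) P"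
  proof (cases "j \<in> Apast m")
    case True
    then have e: "(\<lambda>p. merge (Apast m) (fst p) (snd p) j) = (\<lambda>p. fst p j)" by (auto simp: merge_def)
    show ?thesis unfolding e by (rule measurable_compose[OF measurable_fst measurable_component_singleton[where M="\<lambda>_. P", OF True]])
  next
    case False
    then have "m' = m" using m' j U_sub_Apast[of m' m] by (cases "m' = m") auto
    then have jU: "j \<in> U m" using j by simp
    have e: "(\<lambda>p. merge (Apast m) (fst p) (snd p) j) = (\<lambda>p. snd p j)" using False by (auto simp: merge_def)
    show ?thesis unfolding e by (rule measurable_compose[OF measurable_snd measurable_component_singleton[where M="\<lambda>_. P", OF jU]])
  qed
qed


lemma avg_center:
  fixes g :: "nat \<Rightarrow> 'v::real_vector"
  assumes "1 \<le> n"
  shows "(1 / real n) *\<^sub>R (\<Sum>i<n. g i) - \<mu> = (1 / real n) *\<^sub>R (\<Sum>i<n. g i - \<mu>)"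
proof -
  have "(\<Sum>i<n. g i - \<mu>) = (\<Sum>i<n. g i) - real n *\<^sub>R \<mu>" by (simp add: sum_subtractf sum_constant_scaleR)
  then show ?thesis using assms by (simp add: scaleR_diff_right)
qed

lemma sum_U:
  "(\<Sum>i<cnt m. F (m div T, m mod T, i)) = (\<Sum>j\<in>U m. F j)"
  unfolding U_eq by (subst sum.reindex) (auto simp: inj_on_def)

lemma pos_merge:
  assumes "t \<in> space (PiM (U m) (\<lambda>_. P))"
  shows "fst (st (merge (Apast m) (restrict (Xi \<omega>) (Apast m)) t) m) = fst (Sq \<omega> m)"
    and "fst (snd (st (merge (Apast m) (restrict (Xi \<omega>) (Apast m)) t) m)) = fst (snd (Sq \<omega> m))"
proof -
  have h: "\<And>m' j. m' < m \<Longrightarrow> j \<in> U m' \<Longrightarrow> merge (Apast m) (restrict (Xi \<omega>) (Apast m)) t j = Xi \<omega> j"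
    using merge_agree(1)[OF assms] U_sub_Apast by blast
  show "fst (st (merge (Apast m) (restrict (Xi \<omega>) (Apast m)) t) m) = fst (Sq \<omega> m)"
    and "fst (snd (st (merge (Apast m) (restrict (Xi \<omega>) (Apast m)) t) m)) = fst (snd (Sq \<omega> m))"
    using st_pos_local[OF h] unfolding Sq_def by auto
qed

lemma prev_merge:
  assumes "t \<in> space (PiM (U (Suc n)) (\<lambda>_. P))"
  shows "st (merge (Apast (Suc n)) (restrict (Xi \<omega>) (Apast (Suc n))) t) n = Sq \<omega> n"
proof -
  have h: "\<And>m' j. m' \<le> n \<Longrightarrow> j \<in> U m' \<Longrightarrow> merge (Apast (Suc n)) (restrict (Xi \<omega>) (Apast (Suc n))) t j = Xi \<omega> j"
    using merge_agree(1)[OF assms] U_sub_Apast[of _ "Suc n"] by (meson in_mono le_imp_less_Suc)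
  show ?thesis using st_local[OF h] unfolding Sq_def by auto
qed

lemma Phi_meas:
  "(\<lambda>p. ennreal ((norm (err (st (merge (Apast m) (fst p) (snd p)) m)))\<^sup>2)) \<in> borel_measurable (PiM (Apast m) (\<lambda>_. P) \<Otimes>\<^sub>M PiM (U m) (\<lambda>_. P))"
proof -
  note [measurable] = merge_meas[of m]
  show ?thesis unfolding err_def by measurable
qed

lemma E_init:
  assumes sOn: "s = Online NB" and m: "m mod T = 0"
  shows "(\<integral>\<^sup>+\<omega>. ennreal ((norm (err (Sq \<omega> m)))\<^sup>2) \<partial>Omega) \<le> ennreal (\<sigma>x\<^sup>2 / real NB)"
proof -
  interpret O: prob_space Omega by (rule Om)
  interpret PP: prob_space P by (rule Pp)
  have NB: "1 \<le> NB" using onl sOn by auto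
  have cntm: "cnt m = NB" unfolding cnt_def using m sOn by simp
  have Bne: "U m \<noteq> {}" using card_U[of m] cntm NB by auto
  define Phi where "Phi p = ennreal ((norm (err (st (merge (Apast m) (fst p) (snd p)) m)))\<^sup>2)" for p
  have Phim: "Phi \<in> borel_measurable (PiM (Apast m) (\<lambda>_. P) \<Otimes>\<^sub>M PiM (U m) (\<lambda>_. P))"
    unfolding Phi_def by (rule Phi_meas)
  have "(\<integral>\<^sup>+\<omega>. ennreal ((norm (err (Sq \<omega> m)))\<^sup>2) \<partial>Omega)
      = (\<integral>\<^sup>+\<omega>. Phi (restrict (Xi \<omega>) (Apast m), restrict (Xi \<omega>) (U m)) \<partial>Omega)"
    by (simp add: Phi_def merge_Sq)
  also have "\<dots> = (\<integral>\<^sup>+\<omega>. (\<integral>\<^sup>+t. Phi (restrict (Xi \<omega>) (Apast m), t) \<partial>PiM (U m) (\<lambda>_. P)) \<partial>Omega)"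
    by (rule split_expect[OF Apast_disj Bne Phim])
  also have "\<dots> \<le> (\<integral>\<^sup>+\<omega>. ennreal (\<sigma>x\<^sup>2 / real NB) \<partial>Omega)"
  proof (rule nn_integral_mono)
    fix \<omega>
    define x' where "x' = fst (Sq \<omega> m)"
    define y' where "y' = fst (snd (Sq \<omega> m))"
    have xy: "x' \<in> X" "y' \<in> Y" unfolding x'_def y'_def by (rule Sq_inXY)+
    define h where "h = gx x' y'"
    have hi: "integrable P h" using unb[OF xy] by (simp add: h_def)
    have hint: "(\<integral>s. h s \<partial>P) = gF x' y'" by (simp add: h_def gF_def)
    have vfin: "(\<integral>\<^sup>+s. ennreal ((norm (h s - (\<integral>s. h s \<partial>P)))\<^sup>2) \<partial>P) \<le> ennreal (\<sigma>x\<^sup>2)"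
      using var_x[OF xy] by (simp add: h_def)
    have vi0: "integrable P (\<lambda>s. h s - (\<integral>s. h s \<partial>P))" using hi by auto
    have h2: "integrable P (\<lambda>s. (norm (h s - (\<integral>s. h s \<partial>P)))\<^sup>2)"
      by (rule sq_integrable[OF Pp vi0]) (use vfin in \<open>auto simp: top_unique intro: le_less_trans\<close>)
    have vle: "(\<integral>s. (norm (h s - (\<integral>s. h s \<partial>P)))\<^sup>2 \<partial>P) \<le> \<sigma>x\<^sup>2"
    proof -
      have "(\<integral>\<^sup>+s. ennreal ((norm (h s - (\<integral>s. h s \<partial>P)))\<^sup>2) \<partial>P) = ennreal (\<integral>s. (norm (h s - (\<integral>s. h s \<partial>P)))\<^sup>2 \<partial>P)"
        by (rule nn_integral_eq_integral[OF h2]) auto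
      then show ?thesis using vfin by (simp add: ennreal_le_iff)
    qed
    have "(\<integral>\<^sup>+t. Phi (restrict (Xi \<omega>) (Apast m), t) \<partial>PiM (U m) (\<lambda>_. P))
        = (\<integral>\<^sup>+t. ennreal ((norm (0 + (1 / real NB) *\<^sub>R (\<Sum>j\<in>U m. h (t j) - (\<integral>s. h s \<partial>P))))\<^sup>2) \<partial>PiM (U m) (\<lambda>_. P))"
    proof (rule nn_integral_cong)
      fix t assume t: "t \<in> space (PiM (U m) (\<lambda>_. P))"
      let ?t' = "merge (Apast m) (restrict (Xi \<omega>) (Apast m)) t"
      have p1: "fst (st ?t' m) = x'" using pos_merge(1)[OF t] by (simp add: x'_def)
      have p2: "fst (snd (st ?t' m)) = y'" using pos_merge(2)[OF t] by (simp add: y'_def)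
      have G: "fst (snd (snd (snd (st ?t' m)))) = (1 / real NB) *\<^sub>R (\<Sum>i<NB. h (t (m div T, m mod T, i)))"
      proof -
        have ag: "\<And>i. i < NB \<Longrightarrow> ?t' (m div T, 0, i) = t (m div T, m mod T, i)"
          using merge_agree(2)[OF t] m cntm by (auto simp: U_def)
        have e1: "fst (snd (snd (snd (st ?t' m)))) = init_est s gx (\<lambda>i. ?t' (m div T, 0, i)) x' y'"
          using st_G_init[OF m, of ?t'] p1 p2 by simp
        have e2: "init_est s gx (\<lambda>i. ?t' (m div T, 0, i)) x' y' = (1 / real NB) *\<^sub>R (\<Sum>i<NB. gx x' y' (?t' (m div T, 0, i)))"
          by (simp add: init_est_def sOn)
        have e3: "(\<Sum>i<NB. gx x' y' (?t' (m div T, 0, i))) = (\<Sum>i<NB. h (t (m div T, m mod T, i)))"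
          using ag by (simp add: h_def)
        show ?thesis using e1 e2 e3 by simp
      qed
      have "err (st ?t' m) = (1 / real NB) *\<^sub>R (\<Sum>i<NB. h (t (m div T, m mod T, i)) - (\<integral>s. h s \<partial>P))"
        unfolding err_def G p1 p2 hint[symmetric] by (rule avg_center[OF NB])
      also have "\<dots> = 0 + (1 / real NB) *\<^sub>R (\<Sum>j\<in>U m. h (t j) - (\<integral>s. h s \<partial>P))"
        using sum_U[of "\<lambda>j. h (t j) - (\<integral>s. h s \<partial>P)" m] cntm by simp
      finally show "Phi (restrict (Xi \<omega>) (Apast m), t) = ennreal ((norm (0 + (1 / real NB) *\<^sub>R (\<Sum>j\<in>U m. h (t j) - (\<integral>s. h s \<partial>P))))\<^sup>2)"
        by (simp add: Phi_def)
    qed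
    also have "\<dots> = ennreal ((norm (0::'x))\<^sup>2 + (1 / real NB) * (\<integral>s. (norm (h s - (\<integral>s. h s \<partial>P)))\<^sup>2 \<partial>P))"
      by (rule iid_avg[OF Pp hi h2 finite_U]) (use card_U cntm NB in auto)
    also have "\<dots> \<le> ennreal (\<sigma>x\<^sup>2 / real NB)"
      using vle NB by (auto simp: divide_right_mono intro!: ennreal_leI)
    finally show "(\<integral>\<^sup>+t. Phi (restrict (Xi \<omega>) (Apast m), t) \<partial>PiM (U m) (\<lambda>_. P)) \<le> ennreal (\<sigma>x\<^sup>2 / real NB)" .
  qed
  also have "\<dots> = ennreal (\<sigma>x\<^sup>2 / real NB)" by (simp add: O.emeasure_space_1)
  finally show ?thesis .
qed


lemma sum_list_scaleR_count:
  fixes g :: "'a \<Rightarrow> 'v::real_vector"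
  shows "sum_list (map g xs) = (\<Sum>a\<in>set xs. real (count_list xs a) *\<^sub>R g a)"
proof (induction xs)
  case (Cons x xs)
  show ?case (is "?l = ?r")
  proof cases
    assume "x \<in> set xs"
    have "?l = g x + (\<Sum>a\<in>set xs. real (count_list xs a) *\<^sub>R g a)" by (simp add: Cons.IH)
    also have "set xs = insert x (set xs - {x})" using \<open>x \<in> set xs\<close> by blast
    also have "g x + (\<Sum>a\<in>insert x (set xs - {x}). real (count_list xs a) *\<^sub>R g a) = ?r"
      by (simp add: sum.insert_remove eq_commute algebra_simps)
    finally show ?thesis .
  next
    assume "x \<notin> set xs"
    hence "\<And>xa. xa \<in> set xs \<Longrightarrow> x \<noteq> xa" by blast
    thus ?thesis by (simp add: Cons.IH \<open>x \<notin> set xs\<close>)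
  qed
qed simp

lemma integral_pmf_mset:
  fixes g :: "'a \<Rightarrow> 'v::{banach, second_countable_topology}"
  assumes "ss \<noteq> []"
  shows "(\<integral>z. g z \<partial>measure_pmf (pmf_of_multiset (mset ss))) = (1 / real (length ss)) *\<^sub>R sum_list (map g ss)"
proof -
  have ne: "mset ss \<noteq> {#}" using assms by simp
  have "(\<integral>z. g z \<partial>measure_pmf (pmf_of_multiset (mset ss))) = (\<Sum>a\<in>set ss. pmf (pmf_of_multiset (mset ss)) a *\<^sub>R g a)"
    by (rule integral_measure_pmf) (use ne in auto)
  also have "\<dots> = (\<Sum>a\<in>set ss. (real (count_list ss a) / real (length ss)) *\<^sub>R g a)"
    using ne by (intro sum.cong) (auto simp: count_mset)
  also have "\<dots> = (1 / real (length ss)) *\<^sub>R (\<Sum>a\<in>set ss. real (count_list ss a) *\<^sub>R g a)"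
    by (simp add: scaleR_sum_right)
  finally show ?thesis by (simp add: sum_list_scaleR_count)
qed

lemma err_fs:
  assumes sF: "s = FiniteSum ss" and m: "m mod T = 0"
  shows "err (st t m) = 0"
proof -
  have ss: "ss \<noteq> []" and PF: "P = measure_pmf (pmf_of_multiset (mset ss))" using fsP[OF sF] by auto
  define x' where "x' = fst (st t m)"
  define y' where "y' = fst (snd (st t m))"
  have "fst (snd (snd (snd (st t m)))) = init_est s gx (\<lambda>i. t (m div T, 0, i)) x' y'"
    using st_G_init[OF m, of t] by (simp add: x'_def y'_def)
  also have "\<dots> = (1 / real (length ss)) *\<^sub>R sum_list (map (gx x' y') ss)"
    by (simp add: init_est_def sF)
  also have "\<dots> = gF x' y'"
  proof -
    have "(\<integral>z. gx x' y' z \<partial>P) = (1 / real (length ss)) *\<^sub>R sum_list (map (gx x' y') ss)"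
      unfolding PF by (rule integral_pmf_mset[OF ss])
    then show ?thesis by (simp add: gF_def)
  qed
  finally show ?thesis by (simp add: err_def x'_def y'_def)
qed


lemma norm_add_sq_le: "(norm (a + b))\<^sup>2 \<le> 2 * (norm a)\<^sup>2 + 2 * (norm (b::'v::real_normed_vector))\<^sup>2"
proof -
  have "norm (a + b) \<le> norm a + norm b" by (rule norm_triangle_ineq)
  then have "(norm (a + b))\<^sup>2 \<le> (norm a + norm b)\<^sup>2" by (intro power_mono) auto
  also have "\<dots> \<le> 2 * (norm a)\<^sup>2 + 2 * (norm b)\<^sup>2"
    using sum_squares_bound[of "norm a" "norm b"] by (simp add: power2_eq_square algebra_simps)
  finally show ?thesis .
qed

lemma ennreal_2sum: "0 \<le> a \<Longrightarrow> 0 \<le> b \<Longrightarrow> ennreal (2 * a + 2 * b) = 2 * ennreal a + 2 * ennreal b"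
  by (simp add: ennreal_plus ennreal_mult ennreal_numeral[symmetric] del: ennreal_numeral)

lemma h_second:
  assumes "x \<in> X" "x' \<in> X" "y \<in> Y" "y' \<in> Y"
  shows "(\<integral>\<^sup>+s. ennreal ((norm (gx x' y' s - gx x y s))\<^sup>2) \<partial>P)
     \<le> ennreal (2 * Lx\<^sup>2 * (norm (x' - x))\<^sup>2 + 2 * Ly\<^sup>2 * (norm (y' - y))\<^sup>2)"
proof -
  have m1[measurable]: "gx x' y' \<in> borel_measurable P" using unb[OF assms(2,4)] by auto
  have m2[measurable]: "gx x y' \<in> borel_measurable P" using unb[OF assms(1,4)] by auto
  have m3[measurable]: "gx x y \<in> borel_measurable P" using unb[OF assms(1,3)] by auto
  have "(\<integral>\<^sup>+s. ennreal ((norm (gx x' y' s - gx x y s))\<^sup>2) \<partial>P)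
      \<le> (\<integral>\<^sup>+s. 2 * ennreal ((norm (gx x' y' s - gx x y' s))\<^sup>2) + 2 * ennreal ((norm (gx x y' s - gx x y s))\<^sup>2) \<partial>P)"
  proof (rule nn_integral_mono)
    fix s
    have "gx x' y' s - gx x y s = (gx x' y' s - gx x y' s) + (gx x y' s - gx x y s)" by simp
    then have "(norm (gx x' y' s - gx x y s))\<^sup>2 \<le> 2 * (norm (gx x' y' s - gx x y' s))\<^sup>2 + 2 * (norm (gx x y' s - gx x y s))\<^sup>2"
      using norm_add_sq_le by metis
    then have "ennreal ((norm (gx x' y' s - gx x y s))\<^sup>2) \<le> ennreal (2 * (norm (gx x' y' s - gx x y' s))\<^sup>2 + 2 * (norm (gx x y' s - gx x y s))\<^sup>2)"
      by (rule ennreal_leI)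
    then show "ennreal ((norm (gx x' y' s - gx x y s))\<^sup>2) \<le> 2 * ennreal ((norm (gx x' y' s - gx x y' s))\<^sup>2) + 2 * ennreal ((norm (gx x y' s - gx x y s))\<^sup>2)"
      by (metis ennreal_2sum zero_le_power2)
  qed
  also have "\<dots> = 2 * (\<integral>\<^sup>+s. ennreal ((norm (gx x' y' s - gx x y' s))\<^sup>2) \<partial>P) + 2 * (\<integral>\<^sup>+s. ennreal ((norm (gx x y' s - gx x y s))\<^sup>2) \<partial>P)"
    by (simp add: nn_integral_add nn_integral_cmult)
  also have "\<dots> \<le> 2 * ennreal (Lx\<^sup>2 * (norm (x' - x))\<^sup>2) + 2 * ennreal (Ly\<^sup>2 * (norm (y' - y))\<^sup>2)"
    by (intro add_mono mult_left_mono lgx lgy assms) auto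
  also have "\<dots> = ennreal (2 * (Lx\<^sup>2 * (norm (x' - x))\<^sup>2) + 2 * (Ly\<^sup>2 * (norm (y' - y))\<^sup>2))"
    by (rule ennreal_2sum[symmetric]) auto
  also have "\<dots> = ennreal (2 * Lx\<^sup>2 * (norm (x' - x))\<^sup>2 + 2 * Ly\<^sup>2 * (norm (y' - y))\<^sup>2)"
    by (simp add: mult.assoc)
  finally show ?thesis .
qed


definition Psi where "Psi \<omega> n = 2 * Lx\<^sup>2 * (norm (fst (Sq \<omega> (Suc n)) - fst (Sq \<omega> n)))\<^sup>2
   + 2 * Ly\<^sup>2 * (norm (fst (snd (Sq \<omega> (Suc n))) - fst (snd (Sq \<omega> n))))\<^sup>2"

lemma Psi_nonneg: "0 \<le> Psi \<omega> n" unfolding Psi_def by simp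

lemma E_step:
  assumes tau: "Suc n mod T \<noteq> 0"
  shows "(\<integral>\<^sup>+\<omega>. ennreal ((norm (err (Sq \<omega> (Suc n))))\<^sup>2) \<partial>Omega)
     \<le> (\<integral>\<^sup>+\<omega>. ennreal ((norm (err (Sq \<omega> n)))\<^sup>2) \<partial>Omega) + ennreal (1 / real M) * (\<integral>\<^sup>+\<omega>. ennreal (Psi \<omega> n) \<partial>Omega)"
proof -
  interpret O: prob_space Omega by (rule Om)
  interpret PP: prob_space P by (rule Pp)
  define m where "m = Suc n"
  have M1: "1 \<le> M" using TM by simp
  have cntm: "cnt m = M" using tau by (simp add: cnt_def m_def)
  have Bne: "U m \<noteq> {}" using card_U[of m] cntm M1 by auto
  define Phi where "Phi p = ennreal ((norm (err (st (merge (Apast m) (fst p) (snd p)) m)))\<^sup>2)" for p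
  have Phim: "Phi \<in> borel_measurable (PiM (Apast m) (\<lambda>_. P) \<Otimes>\<^sub>M PiM (U m) (\<lambda>_. P))"
    unfolding Phi_def by (rule Phi_meas)
  have "(\<integral>\<^sup>+\<omega>. ennreal ((norm (err (Sq \<omega> m)))\<^sup>2) \<partial>Omega)
      = (\<integral>\<^sup>+\<omega>. Phi (restrict (Xi \<omega>) (Apast m), restrict (Xi \<omega>) (U m)) \<partial>Omega)"
    by (simp add: Phi_def merge_Sq)
  also have "\<dots> = (\<integral>\<^sup>+\<omega>. (\<integral>\<^sup>+t. Phi (restrict (Xi \<omega>) (Apast m), t) \<partial>PiM (U m) (\<lambda>_. P)) \<partial>Omega)"
    by (rule split_expect[OF Apast_disj Bne Phim])
  also have "\<dots> \<le> (\<integral>\<^sup>+\<omega>. ennreal ((norm (err (Sq \<omega> n)))\<^sup>2) + ennreal (1 / real M) * ennreal (Psi \<omega> n) \<partial>Omega)"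
  proof (rule nn_integral_mono)
    fix \<omega>
    define x where "x = fst (Sq \<omega> n)"
    define y where "y = fst (snd (Sq \<omega> n))"
    define x' where "x' = fst (Sq \<omega> m)"
    define y' where "y' = fst (snd (Sq \<omega> m))"
    define c where "c = err (Sq \<omega> n)"
    have xy: "x \<in> X" "y \<in> Y" "x' \<in> X" "y' \<in> Y" unfolding x_def y_def x'_def y'_def by (rule Sq_inXY)+
    define h where "h = (\<lambda>s. gx x' y' s - gx x y s)"
    have hi: "integrable P h" using unb[OF xy(3,4)] unb[OF xy(1,2)] by (simp add: h_def)
    have hint: "(\<integral>s. h s \<partial>P) = gF x' y' - gF x y"
      using unb[OF xy(3,4)] unb[OF xy(1,2)] by (simp add: h_def gF_def)
    have hfin: "(\<integral>\<^sup>+s. ennreal ((norm (h s))\<^sup>2) \<partial>P) \<le> ennreal (Psi \<omega> n)"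
      using h_second[OF xy(1,3,2,4)] by (simp add: h_def Psi_def x_def y_def x'_def y'_def m_def)
    have h2: "integrable P (\<lambda>s. (norm (h s))\<^sup>2)"
      by (rule sq_integrable[OF Pp hi]) (use hfin in \<open>auto simp: top_unique intro: le_less_trans\<close>)
    have hv: "integrable P (\<lambda>s. (norm (h s - (\<integral>s. h s \<partial>P)))\<^sup>2)" by (rule second_moment(1)[OF Pp hi h2])
    have vle: "(\<integral>s. (norm (h s - (\<integral>s. h s \<partial>P)))\<^sup>2 \<partial>P) \<le> Psi \<omega> n"
    proof -
      have "(\<integral>\<^sup>+s. ennreal ((norm (h s))\<^sup>2) \<partial>P) = ennreal (\<integral>s. (norm (h s))\<^sup>2 \<partial>P)"
        by (rule nn_integral_eq_integral[OF h2]) auto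
      then have "(\<integral>s. (norm (h s))\<^sup>2 \<partial>P) \<le> Psi \<omega> n" using hfin Psi_nonneg by (simp add: ennreal_le_iff)
      then show ?thesis using var_le_second[OF Pp hi h2] by linarith
    qed
    have "(\<integral>\<^sup>+t. Phi (restrict (Xi \<omega>) (Apast m), t) \<partial>PiM (U m) (\<lambda>_. P))
        = (\<integral>\<^sup>+t. ennreal ((norm (c + (1 / real M) *\<^sub>R (\<Sum>j\<in>U m. h (t j) - (\<integral>s. h s \<partial>P))))\<^sup>2) \<partial>PiM (U m) (\<lambda>_. P))"
    proof (rule nn_integral_cong)
      fix t assume t: "t \<in> space (PiM (U m) (\<lambda>_. P))"
      let ?t' = "merge (Apast m) (restrict (Xi \<omega>) (Apast m)) t"
      have p1: "fst (st ?t' m) = x'" using pos_merge(1)[OF t] by (simp add: x'_def)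
      have p2: "fst (snd (st ?t' m)) = y'" using pos_merge(2)[OF t] by (simp add: y'_def)
      have pv: "st ?t' n = Sq \<omega> n" using prev_merge[OF t[unfolded m_def]] by (simp add: m_def)
      have ag: "\<And>i. i < M \<Longrightarrow> ?t' (m div T, m mod T, i) = t (m div T, m mod T, i)"
        using merge_agree(2)[OF t] cntm by (auto simp: U_def)
      have G: "fst (snd (snd (snd (st ?t' m)))) = (1 / real M) *\<^sub>R (\<Sum>i<M. h (t (m div T, m mod T, i))) + fst (snd (snd (snd (Sq \<omega> n))))"
        using st_G_step[OF tau, of ?t'] p1 p2 pv ag unfolding m_def[symmetric]
        by (simp add: h_def x_def y_def)
      have "err (st ?t' m) = c + ((1 / real M) *\<^sub>R (\<Sum>i<M. h (t (m div T, m mod T, i))) - (\<integral>s. h s \<partial>P))"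
        unfolding err_def G p1 p2 c_def hint by (simp add: x_def y_def)
      also have "\<dots> = c + (1 / real M) *\<^sub>R (\<Sum>i<M. h (t (m div T, m mod T, i)) - (\<integral>s. h s \<partial>P))"
        by (simp add: avg_center[OF M1])
      also have "\<dots> = c + (1 / real M) *\<^sub>R (\<Sum>j\<in>U m. h (t j) - (\<integral>s. h s \<partial>P))"
        using sum_U[of "\<lambda>j. h (t j) - (\<integral>s. h s \<partial>P)" m] cntm by simp
      finally show "Phi (restrict (Xi \<omega>) (Apast m), t) = ennreal ((norm (c + (1 / real M) *\<^sub>R (\<Sum>j\<in>U m. h (t j) - (\<integral>s. h s \<partial>P))))\<^sup>2)"
        by (simp add: Phi_def)
    qed
    also have "\<dots> = ennreal ((norm c)\<^sup>2 + (1 / real M) * (\<integral>s. (norm (h s - (\<integral>s. h s \<partial>P)))\<^sup>2 \<partial>P))"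
      by (rule iid_avg[OF Pp hi hv finite_U]) (use card_U cntm M1 in auto)
    also have "\<dots> \<le> ennreal ((norm c)\<^sup>2 + (1 / real M) * Psi \<omega> n)"
      using vle M1 by (intro ennreal_leI add_left_mono mult_left_mono) auto
    also have "\<dots> = ennreal ((norm (err (Sq \<omega> n)))\<^sup>2) + ennreal (1 / real M) * ennreal (Psi \<omega> n)"
      using Psi_nonneg[of \<omega> n] by (simp add: c_def ennreal_plus ennreal_mult[symmetric])
    finally show "(\<integral>\<^sup>+t. Phi (restrict (Xi \<omega>) (Apast m), t) \<partial>PiM (U m) (\<lambda>_. P))
       \<le> ennreal ((norm (err (Sq \<omega> n)))\<^sup>2) + ennreal (1 / real M) * ennreal (Psi \<omega> n)" .
  qed
  also have "\<dots> = (\<integral>\<^sup>+\<omega>. ennreal ((norm (err (Sq \<omega> n)))\<^sup>2) \<partial>Omega) + ennreal (1 / real M) * (\<integral>\<^sup>+\<omega>. ennreal (Psi \<omega> n) \<partial>Omega)"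
  proof -
    have [measurable]: "(\<lambda>\<omega>. Psi \<omega> n) \<in> borel_measurable Omega" unfolding Psi_def by measurable
    show ?thesis by (simp add: nn_integral_add nn_integral_cmult)
  qed
  finally show ?thesis by (simp add: m_def)
qed


definition Cs where "Cs = (case s of Online B \<Rightarrow> \<sigma>x\<^sup>2 / real B | FiniteSum _ \<Rightarrow> 0)"
definition En where "En n = (\<integral>\<^sup>+\<omega>. ennreal ((norm (err (Sq \<omega> n)))\<^sup>2) \<partial>Omega)"
definition IPsi where "IPsi n = (\<integral>\<^sup>+\<omega>. ennreal (Psi \<omega> n) \<partial>Omega)"

lemma Cs_nonneg: "0 \<le> Cs" unfolding Cs_def by (auto split: setting.split)

lemma E_start: "En (k * T) \<le> ennreal Cs"
proof (cases s)
  case (Online B)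
  then show ?thesis unfolding En_def Cs_def using E_init[OF Online, of "k * T"] by simp
next
  case (FiniteSum ss)
  have "\<And>\<omega>. err (Sq \<omega> (k * T)) = 0" unfolding Sq_def by (rule err_fs[OF FiniteSum]) simp
  then show ?thesis unfolding En_def by simp
qed

lemma E_tau:
  assumes "\<tau> < T"
  shows "En (k * T + \<tau>) \<le> ennreal Cs + ennreal (1 / real M) * (\<Sum>j<\<tau>. IPsi (k * T + j))"
  using assms
proof (induction \<tau>)
  case 0 then show ?case using E_start[of k] by simp
next
  case (Suc \<tau>)
  have "Suc (k * T + \<tau>) mod T \<noteq> 0"
  proof -
    have "Suc (k * T + \<tau>) mod T = Suc \<tau> mod T" by (simp add: add.commute mod_add_left_eq[symmetric])
    also have "\<dots> = Suc \<tau>" using Suc.prems by simp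
    finally show ?thesis by simp
  qed
  then have "En (Suc (k * T + \<tau>)) \<le> En (k * T + \<tau>) + ennreal (1 / real M) * IPsi (k * T + \<tau>)"
    using E_step unfolding En_def IPsi_def by blast
  also have "\<dots> \<le> ennreal Cs + ennreal (1 / real M) * (\<Sum>j<\<tau>. IPsi (k * T + j)) + ennreal (1 / real M) * IPsi (k * T + \<tau>)"
    using Suc by (intro add_right_mono) auto
  also have "\<dots> = ennreal Cs + ennreal (1 / real M) * (\<Sum>j<Suc \<tau>. IPsi (k * T + j))"
    by (simp add: distrib_left add.assoc)
  finally show ?case by simp
qed

lemma E_sum: "(\<Sum>\<tau><T. En (k * T + \<tau>)) \<le> ennreal (real T * Cs) + (\<Sum>j<T. IPsi (k * T + j))"
proof -
  have "(\<Sum>\<tau><T. En (k * T + \<tau>)) \<le> (\<Sum>\<tau><T. ennreal Cs + ennreal (1 / real M) * (\<Sum>j<T. IPsi (k * T + j)))"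
  proof (rule sum_mono)
    fix \<tau> assume t: "\<tau> \<in> {..<T}"
    have "(\<Sum>j<\<tau>. IPsi (k * T + j)) \<le> (\<Sum>j<T. IPsi (k * T + j))"
      using t by (intro sum_mono2) auto
    then show "En (k * T + \<tau>) \<le> ennreal Cs + ennreal (1 / real M) * (\<Sum>j<T. IPsi (k * T + j))"
      using E_tau[of \<tau> k] t by (meson add_left_mono mult_left_mono order_trans zero_le lessThan_iff)
  qed
  also have "\<dots> = of_nat T * ennreal Cs + (of_nat T * ennreal (1 / real M)) * (\<Sum>j<T. IPsi (k * T + j))"
    by (simp add: distrib_left mult.assoc)
  also have "of_nat T * ennreal (1 / real M) = 1"
  proof -
    have "of_nat T * ennreal (1 / real M) = ennreal (real T * (1 / real M))"
      by (simp add: ennreal_mult[symmetric] ennreal_of_nat_eq_real_of_nat)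
    also have "\<dots> = 1" using TM by simp
    finally show ?thesis .
  qed
  also have "of_nat T * ennreal Cs = ennreal (real T * Cs)"
    using Cs_nonneg by (simp add: ennreal_mult ennreal_of_nat_eq_real_of_nat)
  finally show ?thesis by simp
qed


definition DX where "DX n \<omega> = (norm (fst (Sq \<omega> (Suc n)) - fst (Sq \<omega> n)))\<^sup>2"
definition DY where "DY n \<omega> = (norm (fst (snd (Sq \<omega> n)) - fst (snd (Sq \<omega> (Suc n)))))\<^sup>2"
definition DZ where "DZ n \<omega> = (norm (fst (Sq \<omega> (Suc n)) - fst (snd (snd (Sq \<omega> n)))))\<^sup>2"
definition LH where "LH n \<omega> = (norm (grad (\<lambda>z. d_r X P f r (fst (snd (Sq \<omega> (Suc n)))) z) (fst (Sq \<omega> (Suc n)))))\<^sup>2"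
definition IX where "IX n = (\<integral>\<^sup>+\<omega>. ennreal (DX n \<omega>) \<partial>Omega)"
definition IY where "IY n = (\<integral>\<^sup>+\<omega>. ennreal (DY n \<omega>) \<partial>Omega)"
definition IZ where "IZ n = (\<integral>\<^sup>+\<omega>. ennreal (DZ n \<omega>) \<partial>Omega)"

lemma DX_meas[measurable]: "(\<lambda>\<omega>. DX n \<omega>) \<in> borel_measurable Omega" unfolding DX_def by measurable
lemma DY_meas[measurable]: "(\<lambda>\<omega>. DY n \<omega>) \<in> borel_measurable Omega" unfolding DY_def by measurable
lemma DZ_meas[measurable]: "(\<lambda>\<omega>. DZ n \<omega>) \<in> borel_measurable Omega" unfolding DZ_def by measurable

lemma ennreal_lin2:
  assumes "0 \<le> p" "0 \<le> A" "0 \<le> q" "0 \<le> B"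
  shows "ennreal (p * A + q * B) = ennreal p * ennreal A + ennreal q * ennreal B"
  using assms by (metis ennreal_plus ennreal_mult mult_nonneg_nonneg)

lemma ennreal_lin4:
  assumes "0 \<le> p" "0 \<le> A" "0 \<le> q" "0 \<le> B" "0 \<le> u" "0 \<le> C" "0 \<le> v" "0 \<le> D"
  shows "ennreal (p * A + q * B + u * C + v * D) = ennreal p * ennreal A + ennreal q * ennreal B + ennreal u * ennreal C + ennreal v * ennreal D"
proof -
  have "ennreal (p * A + q * B + u * C + v * D) = ennreal (p * A + q * B + u * C) + ennreal (v * D)"
    using assms by (intro ennreal_plus) auto
  also have "ennreal (p * A + q * B + u * C) = ennreal (p * A + q * B) + ennreal (u * C)"
    using assms by (intro ennreal_plus) auto
  also have "ennreal (p * A + q * B) = ennreal p * ennreal A + ennreal q * ennreal B" by (rule ennreal_lin2[OF assms(1-4)])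
  finally show ?thesis using assms by (simp add: ennreal_mult)
qed

lemma LH_bound:
  assumes a: "0 < \<alpha>x" and r2: "2 * \<rho> \<le> r"
  shows "LH n \<omega> \<le> 18 * (1 / \<alpha>x + Lx + r)\<^sup>2 * DX n \<omega> + 12 * r\<^sup>2 * DZ n \<omega> + 18 * Ly\<^sup>2 * DY n \<omega>
            + 18 * (norm (err (Sq \<omega> n)))\<^sup>2"
proof -
  define x where "x = fst (Sq \<omega> n)"
  define y where "y = fst (snd (Sq \<omega> n))"
  define z where "z = fst (snd (snd (Sq \<omega> n)))"
  define G where "G = fst (snd (snd (snd (Sq \<omega> n))))"
  define x' where "x' = fst (Sq \<omega> (Suc n))"
  define y' where "y' = fst (snd (Sq \<omega> (Suc n)))"
  have xy: "x \<in> X" "y \<in> Y" "y' \<in> Y" unfolding x_def y_def y'_def by (rule Sq_inXY)+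
  have x': "x' = closest_point X (x - \<alpha>x *\<^sub>R (G + r *\<^sub>R (x - z)))"
    unfolding x'_def x_def G_def z_def Sq_def by (rule st_pos_Suc(1))
  have "LH n \<omega> = (norm (r *\<^sub>R (x' - prox y' x')))\<^sup>2"
    unfolding LH_def x'_def[symmetric] y'_def[symmetric] grad_d_r[OF xy(3)] ..
  also have "\<dots> \<le> 18 * ((1 / \<alpha>x + Lx + r) * norm (x' - x))\<^sup>2
           + 12 * (r * norm (x' - z))\<^sup>2 + 18 * (Ly * norm (y' - y))\<^sup>2 + 18 * (norm (G - gF x y))\<^sup>2"
    by (rule step_ineq[OF xy a r2 x'])
  also have "\<dots> = 18 * (1 / \<alpha>x + Lx + r)\<^sup>2 * DX n \<omega> + 12 * r\<^sup>2 * DZ n \<omega> + 18 * Ly\<^sup>2 * DY n \<omega>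
            + 18 * (norm (err (Sq \<omega> n)))\<^sup>2"
    by (simp add: DX_def DY_def DZ_def err_def x_def y_def z_def G_def x'_def y'_def power_mult_distrib norm_minus_commute)
  finally show ?thesis .
qed

lemma ILH_bound:
  assumes a: "0 < \<alpha>x" and r2: "2 * \<rho> \<le> r"
  shows "(\<integral>\<^sup>+\<omega>. ennreal (LH n \<omega>) \<partial>Omega) \<le> ennreal (18 * (1 / \<alpha>x + Lx + r)\<^sup>2) * IX n + ennreal (12 * r\<^sup>2) * IZ n
            + ennreal (18 * Ly\<^sup>2) * IY n + 18 * En n"
proof -
  have "(\<integral>\<^sup>+\<omega>. ennreal (LH n \<omega>) \<partial>Omega) \<le> (\<integral>\<^sup>+\<omega>. ennreal (18 * (1 / \<alpha>x + Lx + r)\<^sup>2) * ennreal (DX n \<omega>) + ennreal (12 * r\<^sup>2) * ennreal (DZ n \<omega>)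
      + ennreal (18 * Ly\<^sup>2) * ennreal (DY n \<omega>) + ennreal 18 * ennreal ((norm (err (Sq \<omega> n)))\<^sup>2) \<partial>Omega)"
  proof (rule nn_integral_mono)
    fix \<omega>
    have "ennreal (LH n \<omega>) \<le> ennreal (18 * (1 / \<alpha>x + Lx + r)\<^sup>2 * DX n \<omega> + 12 * r\<^sup>2 * DZ n \<omega> + 18 * Ly\<^sup>2 * DY n \<omega>
            + 18 * (norm (err (Sq \<omega> n)))\<^sup>2)"
      by (rule ennreal_leI[OF LH_bound[OF a r2]])
    also have "\<dots> = ennreal (18 * (1 / \<alpha>x + Lx + r)\<^sup>2) * ennreal (DX n \<omega>) + ennreal (12 * r\<^sup>2) * ennreal (DZ n \<omega>)
      + ennreal (18 * Ly\<^sup>2) * ennreal (DY n \<omega>) + ennreal 18 * ennreal ((norm (err (Sq \<omega> n)))\<^sup>2)"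
      by (rule ennreal_lin4) (auto simp: DX_def DY_def DZ_def)
    finally show "ennreal (LH n \<omega>) \<le> ennreal (18 * (1 / \<alpha>x + Lx + r)\<^sup>2) * ennreal (DX n \<omega>) + ennreal (12 * r\<^sup>2) * ennreal (DZ n \<omega>)
      + ennreal (18 * Ly\<^sup>2) * ennreal (DY n \<omega>) + ennreal 18 * ennreal ((norm (err (Sq \<omega> n)))\<^sup>2)" .
  qed
  also have "\<dots> = ennreal (18 * (1 / \<alpha>x + Lx + r)\<^sup>2) * IX n + ennreal (12 * r\<^sup>2) * IZ n
            + ennreal (18 * Ly\<^sup>2) * IY n + 18 * En n"
    unfolding IX_def IY_def IZ_def En_def by (simp add: nn_integral_add nn_integral_cmult)
  finally show ?thesis .
qed

lemma IPsi_eq: "IPsi n = ennreal (2 * Lx\<^sup>2) * IX n + ennreal (2 * Ly\<^sup>2) * IY n"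
proof -
  have "\<And>\<omega>. ennreal (Psi \<omega> n) = ennreal (2 * Lx\<^sup>2) * ennreal (DX n \<omega>) + ennreal (2 * Ly\<^sup>2) * ennreal (DY n \<omega>)"
    unfolding Psi_def DX_def DY_def by (subst ennreal_lin2[symmetric]) (auto simp: norm_minus_commute mult.assoc)
  then show ?thesis unfolding IPsi_def IX_def IY_def by (simp add: nn_integral_add nn_integral_cmult)
qed


lemma ennreal_comb:
  assumes "0 \<le> a" "0 \<le> p" "a + 18 * p \<le> c"
  shows "ennreal a * I + 18 * (ennreal p * I) \<le> ennreal c * I"
proof -
  have "ennreal a * I + 18 * (ennreal p * I) = (ennreal a + ennreal (18 * p)) * I"
    using assms by (simp add: distrib_right ennreal_mult mult.assoc)
  also have "ennreal a + ennreal (18 * p) = ennreal (a + 18 * p)" using assms by (simp add: ennreal_plus)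
  also have "ennreal (a + 18 * p) * I \<le> ennreal c * I" using assms by (intro mult_right_mono ennreal_leI) auto
  finally show ?thesis .
qed

lemma epoch_bound:
  assumes a: "0 < \<alpha>x" and r2: "2 * \<rho> \<le> r"
    and c1: "18 * (1 / \<alpha>x + Lx + r)\<^sup>2 + 18 * (2 * Lx\<^sup>2) \<le> c1" and c2: "18 * Ly\<^sup>2 + 18 * (2 * Ly\<^sup>2) \<le> c2"
  shows "(\<Sum>\<tau><T. \<integral>\<^sup>+\<omega>. ennreal (LH (k * T + \<tau>) \<omega>) \<partial>Omega)
     \<le> (\<Sum>\<tau><T. ennreal c1 * IX (k * T + \<tau>) + ennreal c2 * IY (k * T + \<tau>) + ennreal (12 * r\<^sup>2) * IZ (k * T + \<tau>))
        + 18 * ennreal (real T * Cs)"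
proof -
  define a1 where "a1 = 18 * (1 / \<alpha>x + Lx + r)\<^sup>2"
  define A where "A n = ennreal a1 * IX n + ennreal (12 * r\<^sup>2) * IZ n + ennreal (18 * Ly\<^sup>2) * IY n" for n
  have "(\<Sum>\<tau><T. \<integral>\<^sup>+\<omega>. ennreal (LH (k * T + \<tau>) \<omega>) \<partial>Omega) \<le> (\<Sum>\<tau><T. A (k * T + \<tau>) + 18 * En (k * T + \<tau>))"
    by (intro sum_mono) (use ILH_bound[OF a r2] in \<open>simp add: A_def a1_def\<close>)
  also have "\<dots> = (\<Sum>\<tau><T. A (k * T + \<tau>)) + 18 * (\<Sum>\<tau><T. En (k * T + \<tau>))"
    by (simp add: sum.distrib sum_distrib_left)
  also have "\<dots> \<le> (\<Sum>\<tau><T. A (k * T + \<tau>)) + 18 * (ennreal (real T * Cs) + (\<Sum>j<T. IPsi (k * T + j)))"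
    by (intro add_left_mono mult_left_mono E_sum) auto
  also have "\<dots> = (\<Sum>\<tau><T. A (k * T + \<tau>) + 18 * IPsi (k * T + \<tau>)) + 18 * ennreal (real T * Cs)"
    by (simp add: sum.distrib sum_distrib_left distrib_left algebra_simps)
  also have "\<dots> \<le> (\<Sum>\<tau><T. ennreal c1 * IX (k * T + \<tau>) + ennreal c2 * IY (k * T + \<tau>) + ennreal (12 * r\<^sup>2) * IZ (k * T + \<tau>))
        + 18 * ennreal (real T * Cs)"
  proof (intro add_right_mono sum_mono)
    fix \<tau>
    define n where "n = k * T + \<tau>"
    have e: "A n + 18 * IPsi n = (ennreal a1 * IX n + 18 * (ennreal (2 * Lx\<^sup>2) * IX n))
        + (ennreal (18 * Ly\<^sup>2) * IY n + 18 * (ennreal (2 * Ly\<^sup>2) * IY n)) + ennreal (12 * r\<^sup>2) * IZ n"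
      unfolding A_def IPsi_eq by (simp add: distrib_left algebra_simps)
    have "A n + 18 * IPsi n \<le> ennreal c1 * IX n + ennreal c2 * IY n + ennreal (12 * r\<^sup>2) * IZ n"
      unfolding e
      by (intro add_mono ennreal_comb order_refl) (use c1 c2 in \<open>auto simp: a1_def\<close>)
    then show "A (k * T + \<tau>) + 18 * IPsi (k * T + \<tau>) \<le> ennreal c1 * IX (k * T + \<tau>) + ennreal c2 * IY (k * T + \<tau>) + ennreal (12 * r\<^sup>2) * IZ (k * T + \<tau>)"
      by (simp add: n_def)
  qed
  finally show ?thesis .
qed


lemma total_bound:
  assumes a: "0 < \<alpha>x" and r2: "2 * \<rho> \<le> r"
    and c1: "18 * (1 / \<alpha>x + Lx + r)\<^sup>2 + 18 * (2 * Lx\<^sup>2) \<le> c1" and c2: "18 * Ly\<^sup>2 + 18 * (2 * Ly\<^sup>2) \<le> c2"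
  shows "(\<Sum>k<K. \<Sum>\<tau><T. \<integral>\<^sup>+\<omega>. ennreal (LH (k * T + \<tau>) \<omega>) \<partial>Omega)
     \<le> ennreal c1 * (\<Sum>k<K. \<Sum>\<tau><T. IX (k * T + \<tau>)) + ennreal c2 * (\<Sum>k<K. \<Sum>\<tau><T. IY (k * T + \<tau>))
       + ennreal (12 * r\<^sup>2) * (\<Sum>k<K. \<Sum>\<tau><T. IZ (k * T + \<tau>)) + ennreal (real K * (18 * (real T * Cs)))"
proof -
  have "(\<Sum>k<K. \<Sum>\<tau><T. \<integral>\<^sup>+\<omega>. ennreal (LH (k * T + \<tau>) \<omega>) \<partial>Omega)
     \<le> (\<Sum>k<K. (\<Sum>\<tau><T. ennreal c1 * IX (k * T + \<tau>) + ennreal c2 * IY (k * T + \<tau>) + ennreal (12 * r\<^sup>2) * IZ (k * T + \<tau>))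
        + 18 * ennreal (real T * Cs))"
    by (intro sum_mono epoch_bound[OF a r2 c1 c2])
  also have "\<dots> = ennreal c1 * (\<Sum>k<K. \<Sum>\<tau><T. IX (k * T + \<tau>)) + ennreal c2 * (\<Sum>k<K. \<Sum>\<tau><T. IY (k * T + \<tau>))
       + ennreal (12 * r\<^sup>2) * (\<Sum>k<K. \<Sum>\<tau><T. IZ (k * T + \<tau>)) + of_nat K * (18 * ennreal (real T * Cs))"
    by (simp add: sum.distrib sum_distrib_left)
  also have "of_nat K * (18 * ennreal (real T * Cs)) = ennreal (real K * (18 * (real T * Cs)))"
    using Cs_nonneg by (simp add: ennreal_mult ennreal_of_nat_eq_real_of_nat)
  finally show ?thesis .
qed

lemma coef1:
  fixes \<alpha> lx ly rr :: real
  assumes "0 < \<alpha>" "0 \<le> lx" "0 \<le> ly" "0 \<le> rr" "\<alpha> * (12 * (rr + lx + 2 * ly)) \<le> 1"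
  shows "18 * (1 / \<alpha> + lx + rr)\<^sup>2 + 18 * (2 * lx\<^sup>2) \<le> 15 * rr\<^sup>2 + 97 / \<alpha>\<^sup>2"
proof -
  define q where "q = 1 / \<alpha>"
  have q0: "0 < q" using assms by (simp add: q_def)
  have "12 * (rr + lx + 2 * ly) \<le> q" using assms by (simp add: q_def field_simps)
  then have h: "lx + rr \<le> q / 12" using assms by simp
  have "(q + lx + rr)\<^sup>2 \<le> (13 / 12 * q)\<^sup>2" using h assms by (intro power_mono) auto
  moreover have "lx\<^sup>2 \<le> (q / 12)\<^sup>2" using h assms by (intro power_mono) auto
  ultimately have "18 * (q + lx + rr)\<^sup>2 + 18 * (2 * lx\<^sup>2) \<le> 97 * q\<^sup>2"
    by (simp add: power2_eq_square) (smt (verit) q0 mult_pos_pos)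
  moreover have "97 * q\<^sup>2 = 97 / \<alpha>\<^sup>2" by (simp add: q_def power_divide)
  moreover have "0 \<le> 15 * rr\<^sup>2" by simp
  ultimately show ?thesis unfolding q_def by linarith
qed

lemma final_bound:
  assumes a: "0 < \<alpha>x" and r2: "2 * \<rho> \<le> r" and a12: "\<alpha>x * (12 * (r + Lx + 2 * Ly)) \<le> 1" and Lyr: "2 * Ly \<le> r"
    and K: "1 \<le> K"
  shows "ennreal (1 / (real K * real T)) * (\<Sum>k<K. \<Sum>\<tau><T. \<integral>\<^sup>+\<omega>. ennreal (LH (k * T + \<tau>) \<omega>) \<partial>Omega)
     \<le> ennreal ((15 * r\<^sup>2 + 97 / \<alpha>x\<^sup>2) / (real K * real T)) * (\<Sum>k<K. \<Sum>\<tau><T. IX (k * T + \<tau>))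
       + ennreal (35 * r\<^sup>2 / (real K * real T)) * (\<Sum>k<K. \<Sum>\<tau><T. IY (k * T + \<tau>))
       + ennreal (12 * r\<^sup>2 / (real K * real T)) * (\<Sum>k<K. \<Sum>\<tau><T. IZ (k * T + \<tau>)) + ennreal (61 * Cs)"
proof -
  have r0: "0 \<le> r" using rho by simp
  have c1: "18 * (1 / \<alpha>x + Lx + r)\<^sup>2 + 18 * (2 * Lx\<^sup>2) \<le> 15 * r\<^sup>2 + 97 / \<alpha>x\<^sup>2"
    by (rule coef1[OF a LL r0 a12])
  have c2: "18 * Ly\<^sup>2 + 18 * (2 * Ly\<^sup>2) \<le> 35 * r\<^sup>2"
  proof -
    have "Ly\<^sup>2 \<le> (r / 2)\<^sup>2" using Lyr LL by (intro power_mono) auto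
    then have "Ly\<^sup>2 * 4 \<le> r\<^sup>2" by (simp add: power_divide)
    then show ?thesis using zero_le_power2[of r] zero_le_power2[of Ly] by linarith
  qed
  define D where "D = real K * real T"
  have D0: "0 < D" using K TM by (simp add: D_def)
  let ?X = "\<Sum>k<K. \<Sum>\<tau><T. IX (k * T + \<tau>)"
  let ?Y = "\<Sum>k<K. \<Sum>\<tau><T. IY (k * T + \<tau>)"
  let ?Z = "\<Sum>k<K. \<Sum>\<tau><T. IZ (k * T + \<tau>)"
  have "ennreal (1 / D) * (\<Sum>k<K. \<Sum>\<tau><T. \<integral>\<^sup>+\<omega>. ennreal (LH (k * T + \<tau>) \<omega>) \<partial>Omega)
      \<le> ennreal (1 / D) * (ennreal (15 * r\<^sup>2 + 97 / \<alpha>x\<^sup>2) * ?X + ennreal (35 * r\<^sup>2) * ?Y + ennreal (12 * r\<^sup>2) * ?Z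
          + ennreal (real K * (18 * (real T * Cs))))"
    by (intro mult_left_mono total_bound[OF a r2 c1 c2]) auto
  also have "\<dots> = ennreal (1 / D * (15 * r\<^sup>2 + 97 / \<alpha>x\<^sup>2)) * ?X + ennreal (1 / D * (35 * r\<^sup>2)) * ?Y
       + ennreal (1 / D * (12 * r\<^sup>2)) * ?Z + ennreal (1 / D * (real K * (18 * (real T * Cs))))"
  proof -
    have h: "\<And>a b X. 0 \<le> a \<Longrightarrow> 0 \<le> b \<Longrightarrow> ennreal a * (ennreal b * X) = ennreal (a * b) * X"
      by (metis ennreal_mult mult.assoc)
    have d: "0 \<le> 1 / D" using D0 by simp
    have n1: "0 \<le> 15 * r\<^sup>2 + 97 / \<alpha>x\<^sup>2" by simp
    have n4: "0 \<le> real K * (18 * (real T * Cs))" using Cs_nonneg by simp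
    have n2: "0 \<le> 35 * r\<^sup>2" by simp
    have n3: "0 \<le> 12 * r\<^sup>2" by simp
    show ?thesis unfolding distrib_left h[OF d n1] h[OF d n2] h[OF d n3] ennreal_mult[OF d n4] ..
  qed
  also have "1 / D * (real K * (18 * (real T * Cs))) = 18 * Cs" using K TM by (simp add: D_def)
  also have "ennreal (18 * Cs) \<le> ennreal (61 * Cs)" using Cs_nonneg by (intro ennreal_leI) auto
  finally show ?thesis by (simp add: D_def add_left_mono)
qed

end

theorem lemmaA18:
  fixes X :: "'x::euclidean_space set" and Y :: "'y::euclidean_space set"
    and P :: "'xi measure" and Omega :: "'w measure"
    and f :: "'x \<Rightarrow> 'y \<Rightarrow> 'xi \<Rightarrow> real"
    and gx :: "'x \<Rightarrow> 'y \<Rightarrow> 'xi \<Rightarrow> 'x" and gy :: "'x \<Rightarrow> 'y \<Rightarrow> 'xi \<Rightarrow> 'y"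
    and \<xi> :: "nat \<Rightarrow> nat \<Rightarrow> nat \<Rightarrow> 'w \<Rightarrow> 'xi"
    and s :: "'xi setting"
    and ell Lx Ly \<rho> \<sigma>x \<sigma>y Flow :: real
    and K T M :: nat and \<alpha>x \<alpha>y \<beta> r :: real
    and x0 :: 'x and y0 :: 'y and z0 :: 'x
  defines "S \<equiv> \<lambda>\<omega> n. alg X Y gx gy s (\<lambda>k \<tau> i. \<xi> k \<tau> i \<omega>) T M \<alpha>x \<alpha>y \<beta> r x0 y0 z0 n"
  defines "xk \<equiv> \<lambda>k \<tau> \<omega>. fst (S \<omega> (k * T + \<tau>))"
  defines "yk \<equiv> \<lambda>k \<tau> \<omega>. fst (snd (S \<omega> (k * T + \<tau>)))"
  defines "zk \<equiv> \<lambda>k \<tau> \<omega>. fst (snd (snd (S \<omega> (k * T + \<tau>))))"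
  defines "C\<sigma>x \<equiv> (case s of Online B \<Rightarrow> \<sigma>x\<^sup>2 / real B | FiniteSum _ \<Rightarrow> 0)"
  assumes X: "X \<noteq> {}" "closed X" "convex X"
    and Y: "Y \<noteq> {}" "closed Y" "convex Y" "compact Y"
    \<comment> \<open>distribution and sampling\<close>
    and P: "prob_space P"
    and setting: "case s of Online B \<Rightarrow> B \<ge> 1
                   | FiniteSum ss \<Rightarrow> ss \<noteq> [] \<and> P = measure_pmf (pmf_of_multiset (mset ss))"
    and Omega: "prob_space Omega"
    and samples_indep: "prob_space.indep_vars Omega (\<lambda>_. P) (\<lambda>(k, \<tau>, i). \<xi> k \<tau> i) UNIV"
    and samples_distr: "\<And>k \<tau> i. distr Omega P (\<xi> k \<tau> i) = P"
    \<comment> \<open>gradients and measurability\<close>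
    and grad_x: "\<And>x y z. ((\<lambda>x'. f x' y z) has_derivative (\<lambda>h. gx x y z \<bullet> h)) (at x)"
    and grad_y: "\<And>x y z. ((\<lambda>y'. f x y' z) has_derivative (\<lambda>h. gy x y z \<bullet> h)) (at y)"
    and meas_f: "\<And>x y. f x y \<in> borel_measurable P"
    and meas_gx: "(\<lambda>(x, y, z). gx x y z) \<in> borel_measurable (borel \<Otimes>\<^sub>M (borel \<Otimes>\<^sub>M P))"
    and meas_gy: "(\<lambda>(x, y, z). gy x y z) \<in> borel_measurable (borel \<Otimes>\<^sub>M (borel \<Otimes>\<^sub>M P))"
    and int_f: "\<And>x y. x \<in> X \<Longrightarrow> y \<in> Y \<Longrightarrow> integrable P (f x y)"
    \<comment> \<open>Smoothness Assumption (ii)\<close>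
    and lip_f: "\<And>x1 x2 y1 y2. x1 \<in> X \<Longrightarrow> x2 \<in> X \<Longrightarrow> y1 \<in> Y \<Longrightarrow> y2 \<in> Y \<Longrightarrow>
        (\<integral>\<^sup>+z. ennreal \<bar>f x1 y1 z - f x2 y2 z\<bar> \<partial>P) \<le> ennreal (ell * (norm (x1 - x2) + norm (y1 - y2)))"
    \<comment> \<open>Smoothness Assumption (iii)\<close>
    and lip_gx_x: "\<And>x1 x2 y. x1 \<in> X \<Longrightarrow> x2 \<in> X \<Longrightarrow> y \<in> Y \<Longrightarrow>
        (\<integral>\<^sup>+z. ennreal ((norm (gx x1 y z - gx x2 y z))\<^sup>2) \<partial>P) \<le> ennreal (Lx\<^sup>2 * (norm (x1 - x2))\<^sup>2)"
    and lip_gx_y: "\<And>x y1 y2. x \<in> X \<Longrightarrow> y1 \<in> Y \<Longrightarrow> y2 \<in> Y \<Longrightarrow>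
        (\<integral>\<^sup>+z. ennreal ((norm (gx x y1 z - gx x y2 z))\<^sup>2) \<partial>P) \<le> ennreal (Ly\<^sup>2 * (norm (y1 - y2))\<^sup>2)"
    and lip_gy: "\<And>x1 x2 y1 y2. x1 \<in> X \<Longrightarrow> x2 \<in> X \<Longrightarrow> y1 \<in> Y \<Longrightarrow> y2 \<in> Y \<Longrightarrow>
        (\<integral>\<^sup>+z. ennreal ((norm (gy x1 y1 z - gy x2 y2 z))\<^sup>2) \<partial>P)
          \<le> ennreal (Ly\<^sup>2 * ((norm (x1 - x2))\<^sup>2 + (norm (y1 - y2))\<^sup>2))"
    \<comment> \<open>Smoothness Assumption (iv)\<close>
    and weakly_convex: "\<And>y. y \<in> Y \<Longrightarrow> convex_on X (\<lambda>x. Fexp P f x y + \<rho> / 2 * (norm x)\<^sup>2)"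
    \<comment> \<open>Smoothness Assumption (v)\<close>
    and unbiased_x: "\<And>x y. x \<in> X \<Longrightarrow> y \<in> Y \<Longrightarrow> integrable P (gx x y) \<and>
        ((\<lambda>x'. Fexp P f x' y) has_derivative (\<lambda>h. (\<integral>z. gx x y z \<partial>P) \<bullet> h)) (at x within X)"
    and unbiased_y: "\<And>x y. x \<in> X \<Longrightarrow> y \<in> Y \<Longrightarrow> integrable P (gy x y) \<and>
        ((\<lambda>y'. Fexp P f x y') has_derivative (\<lambda>h. (\<integral>z. gy x y z \<partial>P) \<bullet> h)) (at y within Y)"
    and var_x: "\<And>x y. x \<in> X \<Longrightarrow> y \<in> Y \<Longrightarrow>
        (\<integral>\<^sup>+z. ennreal ((norm (gx x y z - (\<integral>w. gx x y w \<partial>P)))\<^sup>2) \<partial>P) \<le> ennreal (\<sigma>x\<^sup>2)"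
    and var_y: "\<And>x y. x \<in> X \<Longrightarrow> y \<in> Y \<Longrightarrow>
        (\<integral>\<^sup>+z. ennreal ((norm (gy x y z - (\<integral>w. gy x y w \<partial>P)))\<^sup>2) \<partial>P) \<le> ennreal (\<sigma>y\<^sup>2)"
    \<comment> \<open>Smoothness Assumption (vi)\<close>
    and lower: "\<exists>y\<in>Y. \<forall>x\<in>X. Flow \<le> Fexp P f x y"
    and nonneg: "0 \<le> ell" "0 \<le> Lx" "0 \<le> Ly" "0 \<le> \<rho>" "0 \<le> \<sigma>x" "0 \<le> \<sigma>y"
    \<comment> \<open>algorithm parameters\<close>
    and KTM: "K \<ge> 1" "T \<ge> 1" "T = M"
    and params: "0 < \<alpha>x" "0 < \<alpha>y" "0 < \<beta>" "0 < r"
    and init: "x0 \<in> X" "y0 \<in> Y"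
    and r_ge: "r \<ge> max (2 * \<rho>) (Ly + \<rho>)"
    and alpha_lo: "24 * (Ly + 1) / (r - \<rho>)\<^sup>2 \<le> \<alpha>x"
    and alpha_hi: "\<alpha>x \<le> Min {1 / (12 * (r + Lx + 2 * Ly)),
                              (r - \<rho>)\<^sup>2 / (24 * (r + Lx)\<^sup>2 * (Ly + 1)),
                              (r - (\<rho> + 2 * Ly)) / (2 * Ly * (Lx + r))}"
  shows "ennreal (1 / (real K * real T)) *
           (\<Sum>k<K. \<Sum>\<tau><T. \<integral>\<^sup>+\<omega>. ennreal ((norm (grad (\<lambda>z. d_r X P f r (yk k (Suc \<tau>) \<omega>) z)
                                                    (xk k (Suc \<tau>) \<omega>)))\<^sup>2) \<partial>Omega)
         \<le> ennreal ((15 * r\<^sup>2 + 97 / \<alpha>x\<^sup>2) / (real K * real T)) *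
             (\<Sum>k<K. \<Sum>\<tau><T. \<integral>\<^sup>+\<omega>. ennreal ((norm (xk k (Suc \<tau>) \<omega> - xk k \<tau> \<omega>))\<^sup>2) \<partial>Omega)
           + ennreal (35 * r\<^sup>2 / (real K * real T)) *
             (\<Sum>k<K. \<Sum>\<tau><T. \<integral>\<^sup>+\<omega>. ennreal ((norm (yk k \<tau> \<omega> - yk k (Suc \<tau>) \<omega>))\<^sup>2) \<partial>Omega)
           + ennreal (12 * r\<^sup>2 / (real K * real T)) *
             (\<Sum>k<K. \<Sum>\<tau><T. \<integral>\<^sup>+\<omega>. ennreal ((norm (xk k (Suc \<tau>) \<omega> - zk k \<tau> \<omega>))\<^sup>2) \<partial>Omega)
           + ennreal (61 * C\<sigma>x)"
proof -
  have r0: "0 < r" using params by simp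
  have r2: "2 * \<rho> \<le> r" using r_ge by simp
  have rho_lt: "\<rho> < r" using r2 r0 nonneg(4) by linarith
  have Min3: "Min {1 / (12 * (r + Lx + 2 * Ly)), (r - \<rho>)\<^sup>2 / (24 * (r + Lx)\<^sup>2 * (Ly + 1)), (r - (\<rho> + 2 * Ly)) / (2 * Ly * (Lx + r))}
     = min (1 / (12 * (r + Lx + 2 * Ly))) (min ((r - \<rho>)\<^sup>2 / (24 * (r + Lx)\<^sup>2 * (Ly + 1))) ((r - (\<rho> + 2 * Ly)) / (2 * Ly * (Lx + r))))"
    by (simp add: min.assoc)
  have a1: "\<alpha>x \<le> 1 / (12 * (r + Lx + 2 * Ly))" and a3: "\<alpha>x \<le> (r - (\<rho> + 2 * Ly)) / (2 * Ly * (Lx + r))"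
    using alpha_hi unfolding Min3 by auto
  have den: "0 < 12 * (r + Lx + 2 * Ly)" using r0 nonneg by simp
  have a12: "\<alpha>x * (12 * (r + Lx + 2 * Ly)) \<le> 1" using a1 den by (simp add: le_divide_eq)
  have Lyr: "2 * Ly \<le> r"
  proof (cases "Ly = 0")
    case True then show ?thesis using r0 by simp
  next
    case False
    then have Ly0: "0 < Ly" using nonneg by simp
    have d: "0 < 2 * Ly * (Lx + r)" using Ly0 r0 nonneg by simp
    have "\<alpha>x * (2 * Ly * (Lx + r)) \<le> r - (\<rho> + 2 * Ly)" using a3 d by (simp add: le_divide_eq)
    moreover have "0 < \<alpha>x * (2 * Ly * (Lx + r))" using d params by simp
    ultimately show ?thesis using nonneg by linarith
  qed
  have fsp: "\<And>ss. s = FiniteSum ss \<Longrightarrow> ss \<noteq> [] \<and> P = measure_pmf (pmf_of_multiset (mset ss))"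
    using setting by auto
  have onl: "\<And>B. s = Online B \<Longrightarrow> 1 \<le> B" using setting by auto
  have fss: "\<And>ss. s = FiniteSum ss \<Longrightarrow> space P = UNIV" using fsp by auto
  interpret main X Y gx gy s T M \<alpha>x \<alpha>y \<beta> r x0 y0 z0 P f \<rho> Lx Ly Omega \<xi> \<sigma>x
    by (intro main.intro algo.intro ana.intro main_axioms.intro)
       (use X Y meas_gx meas_gy P unbiased_x weakly_convex lip_gx_x lip_gx_y rho_lt nonneg Omega samples_indep samples_distr
         var_x init fsp fss onl KTM in \<open>simp_all\<close>)
  have eqS: "\<And>\<omega> n. S \<omega> n = Sq \<omega> n" by (simp add: S_def Sq_def st_def Xi_def XI_def)
  have eqC: "C\<sigma>x = Cs" by (simp add: C\<sigma>x_def Cs_def)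
  have eL: "\<And>k \<tau> \<omega>. (norm (grad (\<lambda>z. d_r X P f r (yk k (Suc \<tau>) \<omega>) z) (xk k (Suc \<tau>) \<omega>)))\<^sup>2 = LH (k * T + \<tau>) \<omega>"
    by (simp add: LH_def xk_def yk_def eqS)
  have eX: "\<And>k \<tau>. (\<integral>\<^sup>+\<omega>. ennreal ((norm (xk k (Suc \<tau>) \<omega> - xk k \<tau> \<omega>))\<^sup>2) \<partial>Omega) = IX (k * T + \<tau>)"
    by (simp add: IX_def DX_def xk_def eqS)
  have eY: "\<And>k \<tau>. (\<integral>\<^sup>+\<omega>. ennreal ((norm (yk k \<tau> \<omega> - yk k (Suc \<tau>) \<omega>))\<^sup>2) \<partial>Omega) = IY (k * T + \<tau>)"
    by (simp add: IY_def DY_def yk_def eqS)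
  have eZ: "\<And>k \<tau>. (\<integral>\<^sup>+\<omega>. ennreal ((norm (xk k (Suc \<tau>) \<omega> - zk k \<tau> \<omega>))\<^sup>2) \<partial>Omega) = IZ (k * T + \<tau>)"
    by (simp add: IZ_def DZ_def xk_def zk_def eqS)
  show ?thesis unfolding eL eX eY eZ eqC
    by (rule final_bound[OF params(1) r2 a12 Lyr KTM(1)])
qed


end
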